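(* Let $0<a<1$ and let $(\mathbf X_j)_{j\ge0}$ be the persistent random walk on $\mathbb Z$ with persistence parameter $a$ started at $\mathbf X_0=0$, with law $P_a$. Let $\mathbf L:=\inf\{j\ge1:\mathbf X_j=0\}$, and let $\mathbf R$ and $\mathbf U$ be the numbers of runs and of long runs of the excursion path $\mathbf X_0,\dots,\mathbf X_{\mathbf L}$. Then for all integers $n\ge2$ and $k,\ell\ge0$, $$(1-a)P_a(\mathbf L=2n,\mathbf R=2k,\mathbf U=\ell)=a\,P_{1-a}(\mathbf L=2n,\mathbf L-\mathbf R=2k,\mathbf U=\ell).$$ Moreover, for $a=\frac12$ and all real $r,s,t$, $$E\{e^{ir\mathbf R}e^{is\mathbf U}e^{it\mathbf L}\}-E\{e^{ir(\mathbf L-\mathbf R)}e^{is\mathbf U}e^{it\mathbf L}\}=\tfrac12e^{2it}(e^{2ir}-1).$$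
   Context: The persistent random walk with parameter $a$: increments $\varepsilon_j=\mathbf X_j-\mathbf X_{j-1}\in\{\pm1\}$, $P(\varepsilon_1=1)=P(\varepsilon_1=-1)=\frac12$, and for $j\ge1$ the next increment equals the previous one with probability $a$ and is reversed with probability $1-a$. For a nearest-neighbour path, a run is a maximal block of consecutive steps that are all $+1$ or all $-1$; its length is its number of steps; a long run is a run of length at least $2$. *)

theory Defs
  imports "HOL-Probability.Probability"
begin

text \<open>Sample space: a fair coin deciding the first increment, and an i.i.d. stream of
  coins with P(True) = a; True means "the next increment equals the previous one".\<close>

definition PRW :: "real \<Rightarrow> (bool \<times> bool stream) measure" where
  "PRW a = measure_pmf (bernoulli_pmf (1/2)) \<Otimes>\<^sub>M stream_space (measure_pmf (bernoulli_pmf a))"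

text \<open>Increments eps_j = X_j - X_(j-1), for j \<ge> 1 (index 0 unused).\<close>
fun eps :: "bool \<times> bool stream \<Rightarrow> nat \<Rightarrow> int" where
  "eps \<omega> 0 = 0"
| "eps \<omega> (Suc 0) = (if fst \<omega> then 1 else -1)"
| "eps \<omega> (Suc (Suc j)) = eps \<omega> (Suc j) * (if snd \<omega> !! j then 1 else -1)"

definition X :: "bool \<times> bool stream \<Rightarrow> nat \<Rightarrow> int" where
  "X \<omega> n = (\<Sum>j\<in>{1..n}. eps \<omega> j)"

text \<open>First return time (with Inf {} = 0 on the null event of no return).\<close>
definition L :: "bool \<times> bool stream \<Rightarrow> nat" where
  "L \<omega> = Inf {j. j \<ge> 1 \<and> X \<omega> j = 0}"

fun runlens :: "int list \<Rightarrow> nat list" where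
  "runlens [] = []"
| "runlens [x] = [1]"
| "runlens (x # y # xs) =
     (case runlens (y # xs) of
        [] \<Rightarrow> [1]
      | r # rs \<Rightarrow> (if x = y then Suc r # rs else 1 # r # rs))"

definition num_runs :: "int list \<Rightarrow> nat" where
  "num_runs xs = length (runlens xs)"

definition num_long_runs :: "int list \<Rightarrow> nat" where
  "num_long_runs xs = length (filter (\<lambda>r. r \<ge> 2) (runlens xs))"

definition steps :: "bool \<times> bool stream \<Rightarrow> int list" where
  "steps \<omega> = map (eps \<omega>) [1..<Suc (L \<omega>)]"

definition R :: "bool \<times> bool stream \<Rightarrow> nat" where
  "R \<omega> = num_runs (steps \<omega>)"

definition U :: "bool \<times> bool stream \<Rightarrow> nat" where
  "U \<omega> = num_long_runs (steps \<omega>)"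

end

theory Submission
  imports Defs
begin
lemma runlens_ne: "xs \<noteq> [] \<Longrightarrow> runlens xs \<noteq> []"
  by (induction xs rule: runlens.induct) (auto split: list.split)

lemma runlens_CC: "runlens (x # y # zs) = (if x = y then Suc (hd (runlens (y#zs))) # tl (runlens (y#zs)) else 1 # runlens (y#zs))"
  using runlens_ne[of "y#zs"] by (auto split: list.split)

lemma runlens_rep_app: "ys = [] \<or> hd ys \<noteq> s \<Longrightarrow> runlens (replicate (Suc r) s @ ys) = Suc r # runlens ys"
proof (induction r)
  case 0
  then show ?case by (cases ys) (auto split: list.split)
next
  case (Suc r)
  have "runlens (replicate (Suc (Suc r)) s @ ys) = runlens (s # s # (replicate r s @ ys))" by simp
  also have "\<dots> = Suc (Suc r) # runlens ys" unfolding runlens_CC using Suc by simp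
  finally show ?case .
qed

fun expand :: "int \<Rightarrow> nat list \<Rightarrow> int list" where
  "expand s [] = []"
| "expand s (r # rs) = replicate r s @ expand (-s) rs"

lemma length_expand: "length (expand s rl) = sum_list rl"
  by (induction rl arbitrary: s) auto

lemma set_expand: "set (expand s rl) \<subseteq> {s, -s}"
proof (induction rl arbitrary: s)
  case (Cons r rs)
  show ?case using Cons.IH[of "-s"] by auto
qed simp

lemma expand_neg: "expand (-s) rl = map uminus (expand s rl)"
  by (induction rl arbitrary: s) auto

lemma hd_expand: "rl \<noteq> [] \<Longrightarrow> hd rl > 0 \<Longrightarrow> hd (expand s rl) = s"
  by (cases rl) (auto simp: hd_append)

lemma runlens_expand: "s \<noteq> 0 \<Longrightarrow> \<forall>r\<in>set rl. 0 < r \<Longrightarrow> runlens (expand s rl) = rl"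
proof (induction rl arbitrary: s)
  case Nil
  then show ?case by simp
next
  case (Cons r rs)
  then obtain r' where r: "r = Suc r'" by (cases r) auto
  have h: "expand (-s) rs = [] \<or> hd (expand (-s) rs) \<noteq> s"
    using Cons hd_expand[of rs "-s"] by (cases rs) auto
  have "runlens (expand s (r # rs)) = runlens (replicate (Suc r') s @ expand (-s) rs)" using r by simp
  also have "\<dots> = Suc r' # runlens (expand (-s) rs)" by (rule runlens_rep_app[OF h])
  also have "\<dots> = r # rs" using Cons r by simp
  finally show ?case .
qed

lemma expand_runlens: "xs \<noteq> [] \<Longrightarrow> set xs \<subseteq> {1,-1} \<Longrightarrow> expand (hd xs) (runlens xs) = xs"
proof (induction xs rule: runlens.induct)
  case (3 x y zs)
  obtain r rs where rr: "runlens (y # zs) = r # rs" using runlens_ne[of "y#zs"] by (cases "runlens (y#zs)") auto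
  have IH: "replicate r y @ expand (-y) rs = y # zs" using 3 rr by simp
  show ?case
  proof (cases "x = y")
    case True
    then show ?thesis using rr IH by simp
  next
    case False
    then have "y = -x" using 3(3) by auto
    then show ?thesis using rr IH False by simp
  qed
qed auto

lemma runlens_pos: "\<forall>r\<in>set (runlens xs). 0 < r"
  by (induction xs rule: runlens.induct) (auto split: list.split)

lemma sum_runlens: "sum_list (runlens xs) = length xs"
  by (induction xs rule: runlens.induct) (auto split: list.split)

definition exc :: "int list \<Rightarrow> bool" where
  "exc xs \<longleftrightarrow> xs \<noteq> [] \<and> sum_list xs = 0 \<and> (\<forall>j. 0 < j \<and> j < length xs \<longrightarrow> sum_list (take j xs) \<noteq> 0)"

lemma sum_list_uminus: "sum_list (map uminus xs) = - sum_list (xs :: int list)"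
  by (induction xs) auto

lemma exc_neg: "exc (map uminus xs) = exc xs"
  unfolding exc_def by (simp add: take_map sum_list_uminus)

fun pz :: "int \<Rightarrow> int list \<Rightarrow> bool" where
  "pz h [] = False"
| "pz h [x] = (h + x = 0)"
| "pz h (x # y # zs) = (h + x > 0 \<and> pz (h + x) (y # zs))"

lemma pz_imp: "pz h xs \<Longrightarrow> xs \<noteq> [] \<and> h + sum_list xs = 0 \<and> (\<forall>j. 0 < j \<and> j < length xs \<longrightarrow> h + sum_list (take j xs) > 0)"
proof (induction h xs rule: pz.induct)
  case (3 h x y zs)
  then have IH: "y # zs \<noteq> [] \<and> h + x + sum_list (y # zs) = 0 \<and> (\<forall>j. 0 < j \<and> j < length (y # zs) \<longrightarrow> h + x + sum_list (take j (y # zs)) > 0)"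
    and hx: "h + x > 0" by auto
  have A: "h + sum_list (take j (x # y # zs)) > 0" if j: "0 < j \<and> j < length (x # y # zs)" for j
  proof (cases "j = 1")
    case True then show ?thesis using hx by simp
  next
    case False
    then obtain j' where jj: "j = Suc j'" "0 < j'" using j by (cases j) auto
    then have "j' < length (y # zs)" using j by simp
    then have "h + x + sum_list (take j' (y # zs)) > 0" using IH jj(2) by blast
    then show ?thesis using jj(1) by (simp add: add.assoc)
  qed
  have B: "h + sum_list (x # y # zs) = 0" using IH by (simp add: add.assoc)
  show ?case using A B by blast
qed auto

lemma imp_pz: "xs \<noteq> [] \<Longrightarrow> h + sum_list xs = 0 \<Longrightarrow> (\<forall>j. 0 < j \<and> j < length xs \<longrightarrow> h + sum_list (take j xs) > 0) \<Longrightarrow> pz h xs"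
proof (induction h xs rule: pz.induct)
  case (3 h x y zs)
  have hx: "h + x > 0" using 3(4)[rule_format, of 1] by simp
  have "pz (h + x) (y # zs)"
  proof (rule 3(1))
    show "\<forall>j. 0 < j \<and> j < length (y # zs) \<longrightarrow> h + x + sum_list (take j (y # zs)) > 0"
    proof (intro allI impI)
      fix j assume "0 < j \<and> j < length (y # zs)"
      then show "h + x + sum_list (take j (y # zs)) > 0"
        using 3(4)[rule_format, of "Suc j"] by (simp add: add.assoc)
    qed
    show "y # zs \<noteq> []" by simp
    show "h + x + sum_list (y # zs) = 0" using 3(3) by (simp add: add.assoc)
  qed
  then show ?case using hx by simp
qed auto

lemma exc_pos: assumes "set xs \<subseteq> {1,-1}" "hd xs = 1" "exc xs"
  shows "\<forall>j. 0 < j \<and> j < length xs \<longrightarrow> sum_list (take j xs) > 0"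
proof -
  have ne: "xs \<noteq> []" using assms(3) unfolding exc_def by auto
  have "0 < Suc j \<and> Suc j < length xs \<longrightarrow> sum_list (take (Suc j) xs) > 0" for j
  proof (induction j)
    case 0
    then show ?case using ne assms(2) by (cases xs) auto
  next
    case (Suc j)
    show ?case
    proof
      assume a: "0 < Suc (Suc j) \<and> Suc (Suc j) < length xs"
      have "take (Suc (Suc j)) xs = take (Suc j) xs @ [xs ! Suc j]"
        using a by (simp add: take_Suc_conv_app_nth)
      moreover have "xs ! Suc j \<in> set xs" using a by simp
      then have "xs ! Suc j \<in> {1,-1}" using assms(1) by blast
      moreover have "sum_list (take (Suc (Suc j)) xs) \<noteq> 0" using assms(3) a unfolding exc_def by blast
      ultimately show "sum_list (take (Suc (Suc j)) xs) > 0" using Suc a by auto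
    qed
  qed
  note * = this
  show ?thesis
  proof (intro allI impI)
    fix j assume a: "0 < j \<and> j < length xs"
    then obtain j' where "j = Suc j'" by (cases j) auto
    then show "sum_list (take j xs) > 0" using *[of j'] a by blast
  qed
qed

lemma exc_pz: "set xs \<subseteq> {1,-1} \<Longrightarrow> hd xs = 1 \<Longrightarrow> exc xs \<Longrightarrow> pz 0 xs"
  using exc_pos[of xs] imp_pz[of xs 0] unfolding exc_def by auto

lemma pz_exc: "pz 0 xs \<Longrightarrow> exc xs"
  using pz_imp[of 0 xs] unfolding exc_def by fastforce

lemma pz_up: "h \<ge> 0 \<Longrightarrow> ys \<noteq> [] \<Longrightarrow> pz h (replicate u 1 @ ys) = pz (h + int u) ys"
proof (induction u arbitrary: h)
  case (Suc u)
  have "pz h (replicate (Suc u) 1 @ ys) = pz h (1 # (replicate u 1 @ ys))" by simp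
  also have "\<dots> = pz (h + 1) (replicate u 1 @ ys)"
    using Suc by (cases "replicate u 1 @ ys") auto
  also have "\<dots> = pz (h + 1 + int u) ys" using Suc by simp
  finally show ?case by (simp add: add.assoc)
qed simp

lemma pz_down: "ys \<noteq> [] \<Longrightarrow> pz h (replicate (Suc d) (-1) @ ys) = (h - int (Suc d) > 0 \<and> pz (h - int (Suc d)) ys)"
proof (induction d arbitrary: h)
  case 0
  then show ?case by (cases ys) auto
next
  case (Suc d)
  have "pz h (replicate (Suc (Suc d)) (-1) @ ys) = pz h ((-1) # (replicate (Suc d) (-1) @ ys))" by simp
  also have "\<dots> = (h - 1 > 0 \<and> pz (h - 1) (replicate (Suc d) (-1) @ ys))" by simp
  also have "\<dots> = (h - 1 > 0 \<and> h - 1 - int (Suc d) > 0 \<and> pz (h - 1 - int (Suc d)) ys)"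
    using Suc.IH[of "h-1"] Suc.prems by simp
  also have "h - 1 - int (Suc d) = h - int (Suc (Suc d))" by simp
  also have "(h - 1 > 0 \<and> h - int (Suc (Suc d)) > 0 \<and> pz (h - int (Suc (Suc d))) ys) = (h - int (Suc (Suc d)) > 0 \<and> pz (h - int (Suc (Suc d))) ys)"
    by auto
  finally show ?case .
qed

lemma pz_down_end: "pz h (replicate (Suc d) (-1)) = (h = int (Suc d))"
proof (induction d arbitrary: h)
  case (Suc d)
  have "pz h (replicate (Suc (Suc d)) (-1)) = pz h ((-1) # (replicate (Suc d) (-1)))" by simp
  also have "\<dots> = (h - 1 > 0 \<and> pz (h - 1) (replicate (Suc d) (-1)))" by simp
  finally show ?case using Suc by auto
qed simp

lemma pz_up_only: "h \<ge> 0 \<Longrightarrow> \<not> pz h (replicate (Suc u) 1)"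
proof (induction u arbitrary: h)
  case (Suc u)
  have "pz h (replicate (Suc (Suc u)) 1) = pz h (1 # (replicate (Suc u) 1))" by simp
  also have "\<dots> = (h + 1 > 0 \<and> pz (h + 1) (replicate (Suc u) 1))" by simp
  finally show ?case using Suc.IH[of "h+1"] Suc.prems by auto
qed simp

fun okrl :: "int \<Rightarrow> nat list \<Rightarrow> bool" where
  "okrl h [] = False"
| "okrl h [u] = False"
| "okrl h [u, d] = (h + int u = int d)"
| "okrl h (u # d # v # rest) = (h + int u - int d > 0 \<and> okrl (h + int u - int d) (v # rest))"

lemma pz_expand: "h \<ge> 0 \<Longrightarrow> \<forall>r\<in>set rl. 0 < r \<Longrightarrow> pz h (expand 1 rl) = okrl h rl"
proof (induction h rl rule: okrl.induct)
  case (2 h u)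
  then obtain u' where "u = Suc u'" by (cases u) auto
  then show ?case using pz_up_only[OF 2(1)] by simp
next
  case (3 h u d)
  then obtain d' where d: "d = Suc d'" by (cases d) auto
  have "pz h (expand 1 [u, d]) = pz h (replicate u 1 @ replicate d (-1))" by simp
  also have "\<dots> = pz (h + int u) (replicate d (-1))" using 3 d by (intro pz_up) auto
  also have "\<dots> = (h + int u = int d)" using d pz_down_end by simp
  finally show ?case by simp
next
  case (4 h u d v rest)
  then obtain d' where d: "d = Suc d'" by (cases d) auto
  have ne: "expand 1 (v # rest) \<noteq> []" using 4 by (cases v) auto
  have "pz h (expand 1 (u # d # v # rest)) = pz h (replicate u 1 @ (replicate d (-1) @ expand 1 (v # rest)))" by simp
  also have "\<dots> = pz (h + int u) (replicate d (-1) @ expand 1 (v # rest))" using 4 ne by (intro pz_up) auto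
  also have "\<dots> = (h + int u - int d > 0 \<and> pz (h + int u - int d) (expand 1 (v # rest)))"
    using pz_down[OF ne] d by simp
  also have "\<dots> = (h + int u - int d > 0 \<and> okrl (h + int u - int d) (v # rest))"
    using 4 by auto
  finally show ?case by simp
qed simp

fun odds :: "'a list \<Rightarrow> 'a list" where
  "odds [] = []" | "odds [x] = [x]" | "odds (x # y # zs) = x # odds zs"
fun evns :: "'a list \<Rightarrow> 'a list" where
  "evns [] = []" | "evns [x] = []" | "evns (x # y # zs) = y # evns zs"
fun inter :: "'a list \<Rightarrow> 'a list \<Rightarrow> 'a list" where
  "inter (x # xs) (y # ys) = x # y # inter xs ys" | "inter _ _ = []"

lemma okrl_iff: "okrl h rl \<longleftrightarrow> rl \<noteq> [] \<and> even (length rl) \<and> h + int (sum_list (odds rl)) = int (sum_list (evns rl))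
   \<and> (\<forall>j. 0 < j \<and> j < length rl div 2 \<longrightarrow> int (sum_list (take j (evns rl))) < h + int (sum_list (take j (odds rl))))"
proof (induction h rl rule: okrl.induct)
  case (4 h u d v rest)
  define Os where "Os = odds (v # rest)"
  define Es where "Es = evns (v # rest)"
  define m where "m = length (v # rest)"
  define h' where "h' = h + int u - int d"
  have IH: "okrl h' (v # rest) \<longleftrightarrow> even m \<and> h' + int (sum_list Os) = int (sum_list Es)
     \<and> (\<forall>j. 0 < j \<and> j < m div 2 \<longrightarrow> int (sum_list (take j Es)) < h' + int (sum_list (take j Os)))"
    using 4 unfolding Os_def Es_def m_def h'_def by simp
  have L: "okrl h (u # d # v # rest) \<longleftrightarrow> h' > 0 \<and> okrl h' (v # rest)" unfolding h'_def by simp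
  have R: "(u # d # v # rest \<noteq> [] \<and> even (length (u # d # v # rest)) \<and> h + int (sum_list (odds (u # d # v # rest))) = int (sum_list (evns (u # d # v # rest)))
   \<and> (\<forall>j. 0 < j \<and> j < length (u # d # v # rest) div 2 \<longrightarrow> int (sum_list (take j (evns (u # d # v # rest)))) < h + int (sum_list (take j (odds (u # d # v # rest))))))
   \<longleftrightarrow> even m \<and> h' + int (sum_list Os) = int (sum_list Es)
   \<and> (\<forall>j. 0 < j \<and> j < m div 2 + 1 \<longrightarrow> int (sum_list (take j (d # Es))) < h + int (sum_list (take j (u # Os))))"
  proof -
    have e1: "odds (u # d # v # rest) = u # Os" unfolding Os_def by simp
    have e2: "evns (u # d # v # rest) = d # Es" unfolding Es_def by simp
    have e3: "length (u # d # v # rest) div 2 = m div 2 + 1" unfolding m_def by simp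
    have e4: "even (length (u # d # v # rest)) = even m" unfolding m_def by simp
    have C: "(h + int (sum_list (u # Os)) = int (sum_list (d # Es))) \<longleftrightarrow> (h' + int (sum_list Os) = int (sum_list Es))"
      unfolding h'_def by simp (rule iffI; linarith)
    show ?thesis unfolding e1 e2 e3 e4 using C by blast
  qed
  have m1: "m \<ge> 1" unfolding m_def by simp
  show ?case
    unfolding L R IH
  proof
    assume a: "h' > 0 \<and> even m \<and> h' + int (sum_list Os) = int (sum_list Es)
     \<and> (\<forall>j. 0 < j \<and> j < m div 2 \<longrightarrow> int (sum_list (take j Es)) < h' + int (sum_list (take j Os)))"
    have "int (sum_list (take j (d # Es))) < h + int (sum_list (take j (u # Os)))" if j: "0 < j \<and> j < m div 2 + 1" for j
    proof (cases "j = 1")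
      case True then show ?thesis using a unfolding h'_def by simp
    next
      case False
      then obtain j' where jj: "j = Suc j'" "0 < j'" using j by (cases j) auto
      then have "int (sum_list (take j' Es)) < h' + int (sum_list (take j' Os))" using a j by auto
      then show ?thesis using jj unfolding h'_def by simp
    qed
    then show "even m \<and> h' + int (sum_list Os) = int (sum_list Es)
     \<and> (\<forall>j. 0 < j \<and> j < m div 2 + 1 \<longrightarrow> int (sum_list (take j (d # Es))) < h + int (sum_list (take j (u # Os))))"
      using a by blast
  next
    assume a: "even m \<and> h' + int (sum_list Os) = int (sum_list Es)
     \<and> (\<forall>j. 0 < j \<and> j < m div 2 + 1 \<longrightarrow> int (sum_list (take j (d # Es))) < h + int (sum_list (take j (u # Os))))"
    have "even m" using a by blast
    then have m2: "m div 2 \<ge> 1" using m1 by (auto elim!: evenE)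
    have "int (sum_list (take 1 (d # Es))) < h + int (sum_list (take 1 (u # Os)))" using a m2 by auto
    then have hp: "h' > 0" unfolding h'_def by simp
    have "int (sum_list (take j Es)) < h' + int (sum_list (take j Os))" if j: "0 < j \<and> j < m div 2" for j
    proof -
      have "int (sum_list (take (Suc j) (d # Es))) < h + int (sum_list (take (Suc j) (u # Os)))" using a j by auto
      then show ?thesis unfolding h'_def by simp
    qed
    then show "h' > 0 \<and> even m \<and> h' + int (sum_list Os) = int (sum_list Es)
     \<and> (\<forall>j. 0 < j \<and> j < m div 2 \<longrightarrow> int (sum_list (take j Es)) < h' + int (sum_list (take j Os)))"
      using a hp by blast
  qed
qed simp_all

definition cT :: "bool list \<Rightarrow> nat" where "cT w = length (filter id w)"

lemma cT_simps[simp]: "cT [] = 0" "cT (True # w) = Suc (cT w)" "cT (False # w) = cT w"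
  "cT (xs @ ys) = cT xs + cT ys" "cT (replicate k False) = 0"
  by (auto simp: cT_def)

lemma cT_map_Not: "cT (map Not w) = length w - cT w"
  unfolding cT_def by (induction w) (auto simp: Suc_diff_le)

lemma cT_le: "cT w \<le> length w" unfolding cT_def by simp

lemma cT_take_le: "cT (take x w) \<le> cT w"
  unfolding cT_def by (induction w arbitrary: x) (auto simp: take_Cons split: nat.split)

fun bits :: "nat list \<Rightarrow> bool list" where
  "bits [] = []"
| "bits (r # rs) = replicate (r - 1) False @ True # bits rs"

fun ub :: "nat \<Rightarrow> bool list \<Rightarrow> nat list" where
  "ub c [] = []"
| "ub c (b # w) = (if b then Suc c # ub 0 w else ub (Suc c) w)"

fun ft :: "bool list \<Rightarrow> nat" where
  "ft (x # y # w) = (if \<not> x \<and> y then 1 else 0) + ft (y # w)"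
| "ft _ = 0"

fun tf :: "bool list \<Rightarrow> nat" where
  "tf (x # y # w) = (if x \<and> \<not> y then 1 else 0) + tf (y # w)"
| "tf _ = 0"

lemma ub_rep: "ub c (replicate k False @ w) = ub (c + k) w"
  by (induction k arbitrary: c) auto

lemma ub_bits: "\<forall>r\<in>set rs. 0 < r \<Longrightarrow> ub 0 (bits rs) = rs"
  by (induction rs) (auto simp: ub_rep)

lemma bits_ub: "w \<noteq> [] \<Longrightarrow> last w \<Longrightarrow> bits (ub c w) = replicate c False @ w"
proof (induction w arbitrary: c)
  case (Cons b w)
  show ?case
  proof (cases b)
    case True
    then show ?thesis using Cons by (cases "w = []") auto
  next
    case False
    then have "w \<noteq> []" using Cons by auto
    then show ?thesis using Cons False by (simp add: replicate_app_Cons_same)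
  qed
qed simp

lemma ub_pos: "\<forall>r\<in>set (ub c w). 0 < r"
  by (induction c w rule: ub.induct) auto

lemma length_ub: "length (ub c w) = cT w"
  by (induction c w rule: ub.induct) auto

lemma length_bits: "\<forall>r\<in>set rs. 0 < r \<Longrightarrow> length (bits rs) = sum_list rs"
  by (induction rs) auto

lemma cT_bits: "cT (bits rs) = length rs"
  by (induction rs) auto

lemma sum_ub: "w \<noteq> [] \<Longrightarrow> last w \<Longrightarrow> sum_list (ub 0 w) = length w"
  using bits_ub[of w 0] length_bits[of "ub 0 w"] ub_pos[of 0 w] by simp

lemma ft_Cons: "ft (x # w) = (case w of [] \<Rightarrow> 0 | y # _ \<Rightarrow> (if \<not> x \<and> y then 1 else 0)) + ft w"
  by (cases w) auto

lemma tf_Cons: "tf (x # w) = (case w of [] \<Rightarrow> 0 | y # _ \<Rightarrow> (if x \<and> \<not> y then 1 else 0)) + tf w"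
  by (cases w) auto

lemma ft_True: "ft (True # w) = ft w"
  by (cases w) auto

lemma ft_rep: "ft (replicate (Suc k) False @ True # w) = Suc (ft w)"
proof (induction k)
  case 0
  then show ?case using ft_True[of w] by simp
next
  case (Suc k)
  then show ?case by simp
qed

lemma ft_bits: "\<forall>r\<in>set rs. 0 < r \<Longrightarrow> ft (bits rs) = length (filter (\<lambda>r. 2 \<le> r) rs)"
proof (induction rs)
  case (Cons r rs)
  show ?case
  proof (cases "r = 1")
    case True
    then show ?thesis using Cons ft_True by simp
  next
    case False
    then obtain k where k: "r - 1 = Suc k" using Cons.prems by (cases "r - 1") auto
    then show ?thesis using Cons ft_rep[of k "bits rs"] by simp
  qed
qed simp

lemma ft_not: "ft (map Not w) = tf w"
  by (induction w rule: ft.induct) auto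

lemma tf_not: "tf (map Not w) = ft w"
  by (induction w rule: ft.induct) auto

lemma ft_FaT: "ft (x # w @ [True]) + (if x then 1 else 0) = Suc (tf (x # w))"
proof (induction w arbitrary: x)
  case Nil
  then show ?case by simp
next
  case (Cons y w)
  have "ft (x # (y # w) @ [True]) = (if \<not> x \<and> y then 1 else 0) + ft (y # w @ [True])" by simp
  moreover have "tf (x # y # w) = (if x \<and> \<not> y then 1 else 0) + tf (y # w)" by simp
  ultimately show ?case using Cons[of y] by auto
qed

lemma ft_bFT: "ft (b @ [False, True]) = Suc (ft b)"
proof (induction b)
  case (Cons x b)
  then show ?case by (cases b) auto
qed simp

lemma galois: "\<forall>r\<in>set u. 0 < r \<Longrightarrow> 0 < j \<Longrightarrow> j \<le> length u \<Longrightarrow>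
   (j \<le> cT (take x (bits u))) = (sum_list (take j u) \<le> x)"
proof (induction u arbitrary: j x)
  case (Cons r u)
  then obtain r' where r: "r = Suc r'" by (cases r) auto
  show ?case
  proof (cases "x < r")
    case True
    then have "take x (bits (r # u)) = replicate x False" using r by (simp add: take_append)
    moreover have "sum_list (take j (r # u)) \<ge> r" using Cons(3) by (cases j) auto
    ultimately show ?thesis using True Cons(3) by auto
  next
    case False
    then have t: "take x (bits (r # u)) = replicate r' False @ True # take (x - r) (bits u)"
      using r by (simp add: take_append)
      (metis Suc_diff_Suc diff_diff_left not_less_eq plus_1_eq_Suc take_Suc_Cons)
    show ?thesis
    proof (cases "j = 1")
      case True
      then show ?thesis using t False by simp
    next
      case j1: False
      then obtain j' where jj: "j = Suc j'" "0 < j'" using Cons(3) by (cases j) auto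
      have "(j' \<le> cT (take (x - r) (bits u))) = (sum_list (take j' u) \<le> x - r)"
        using Cons jj by auto
      then show ?thesis using t jj False by auto
    qed
  qed
qed simp

lemma psum_strict: "\<forall>r\<in>set u. 0 < r \<Longrightarrow> j < k \<Longrightarrow> k \<le> length u \<Longrightarrow> sum_list (take j u) < sum_list (take k (u :: nat list))"
proof (induction u arbitrary: j k)
  case (Cons r u)
  then obtain k' where k: "k = Suc k'" by (cases k) auto
  show ?case
  proof (cases j)
    case 0
    then show ?thesis using Cons k by simp
  next
    case (Suc j')
    then show ?thesis using Cons k by auto
  qed
qed simp

lemma odds_inter: "length u = length d \<Longrightarrow> odds (inter u d) = u"
  by (induction u d rule: inter.induct) auto
lemma evns_inter: "length u = length d \<Longrightarrow> evns (inter u d) = d"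
  by (induction u d rule: inter.induct) auto
lemma length_inter: "length u = length d \<Longrightarrow> length (inter u d) = length u + length d"
  by (induction u d rule: inter.induct) auto
lemma inter_odds_evns: "even (length rl) \<Longrightarrow> inter (odds rl) (evns rl) = rl"
  by (induction rl rule: odds.induct) auto
lemma length_odds_evns: "even (length rl) \<Longrightarrow> length (odds rl) = length (evns rl)"
  by (induction rl rule: odds.induct) auto
lemma length_odds_evns2: "length rl = length (odds rl) + length (evns rl)"
  by (induction rl rule: odds.induct) auto
lemma sum_odds_evns: "sum_list rl = sum_list (odds rl) + sum_list (evns (rl :: nat list))"
  by (induction rl rule: odds.induct) auto
lemma filter_odds_evns: "length (filter P rl) = length (filter P (odds rl)) + length (filter P (evns rl))"
  by (induction rl rule: odds.induct) auto
lemma set_odds: "set (odds rl) \<subseteq> set rl"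
  by (induction rl rule: odds.induct) auto
lemma set_evns: "set (evns rl) \<subseteq> set rl"
  by (induction rl rule: odds.induct) auto
lemma set_inter: "set (inter u d) \<subseteq> set u \<union> set d"
  by (induction u d rule: inter.induct) auto

lemma bridge:
  assumes pu: "\<forall>r\<in>set u. 0 < r" and pd: "\<forall>r\<in>set d. 0 < r" and len: "length u = length d"
    and su: "sum_list u = n" and sd: "sum_list d = n"
  shows "(\<forall>j. 0 < j \<and> j < length u \<longrightarrow> sum_list (take j d) < sum_list (take j u)) \<longleftrightarrow>
         (\<forall>x. 1 \<le> x \<and> x < n \<longrightarrow> cT (take x (bits u)) \<le> cT (take (x - 1) (bits d)))"
proof
  assume I: "\<forall>j. 0 < j \<and> j < length u \<longrightarrow> sum_list (take j d) < sum_list (take j u)"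
  show "\<forall>x. 1 \<le> x \<and> x < n \<longrightarrow> cT (take x (bits u)) \<le> cT (take (x - 1) (bits d))"
  proof (intro allI impI)
    fix x assume x: "1 \<le> x \<and> x < n"
    define j where "j = cT (take x (bits u))"
    show "cT (take x (bits u)) \<le> cT (take (x - 1) (bits d))"
    proof (cases "j = 0")
      case True then show ?thesis unfolding j_def by simp
    next
      case False
      have jl: "j \<le> length u" unfolding j_def using cT_take_le[of x "bits u"] cT_bits[of u] by simp
      have g1: "sum_list (take j u) \<le> x" using galois[OF pu, of j x] False jl unfolding j_def by simp
      have "j \<noteq> length u"
      proof
        assume "j = length u"
        then have "sum_list (take j u) = n" using su by simp
        then show False using g1 x by simp
      qed
      then have "j < length u" using jl by simp
      then have "sum_list (take j d) < sum_list (take j u)" using I False by simp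
      then have "sum_list (take j d) \<le> x - 1" using g1 by simp
      then have "j \<le> cT (take (x - 1) (bits d))" using galois[OF pd, of j "x - 1"] False jl len by simp
      then show ?thesis unfolding j_def by simp
    qed
  qed
next
  assume II: "\<forall>x. 1 \<le> x \<and> x < n \<longrightarrow> cT (take x (bits u)) \<le> cT (take (x - 1) (bits d))"
  show "\<forall>j. 0 < j \<and> j < length u \<longrightarrow> sum_list (take j d) < sum_list (take j u)"
  proof (intro allI impI)
    fix j assume j: "0 < j \<and> j < length u"
    define x where "x = sum_list (take j u)"
    have "sum_list (take 0 u) < sum_list (take j u)" using psum_strict[OF pu, of 0 j] j by simp
    then have x1: "1 \<le> x" unfolding x_def by simp
    have "sum_list (take j u) < sum_list (take (length u) u)" using psum_strict[OF pu, of j "length u"] j by simp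
    then have xn: "x < n" unfolding x_def using su by simp
    have "j \<le> cT (take x (bits u))" using galois[OF pu, of j x] j unfolding x_def by simp
    then have "j \<le> cT (take (x - 1) (bits d))" using II x1 xn by (meson le_trans)
    then have "sum_list (take j d) \<le> x - 1" using galois[OF pd, of j "x - 1"] j len by simp
    then show "sum_list (take j d) < sum_list (take j u)" using x1 unfolding x_def by simp
  qed
qed

lemma bits_ne: "bits rs = [] \<longleftrightarrow> rs = []"
  by (cases rs) auto

lemma bits_last: "rs \<noteq> [] \<Longrightarrow> bits rs \<noteq> [] \<and> last (bits rs)"
proof (induction rs)
  case (Cons r rs)
  then show ?case by (cases "rs = []") (auto simp: bits_ne)
qed simp

lemma bb: "butlast (butlast (b @ [y, z])) = b"
  by (metis append.assoc append_Cons append_Nil butlast_snoc)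

lemma decomp1: "length w \<ge> 2 \<Longrightarrow> last w \<Longrightarrow> \<exists>x0 a. w = x0 # a @ [True] \<and> length a = length w - 2"
proof -
  assume a: "length w \<ge> 2" "last w"
  obtain x0 w' where w: "w = x0 # w'" using a by (cases w) auto
  have "w' \<noteq> []" using a w by auto
  then have "w' = butlast w' @ [last w']" by simp
  moreover have "last w' = True" using a w \<open>w' \<noteq> []\<close> by simp
  ultimately have "w = x0 # butlast w' @ [True]" using w by metis
  then show ?thesis using w by (intro exI[of _ x0] exI[of _ "butlast w'"]) auto
qed

lemma decomp2: "length w \<ge> 2 \<Longrightarrow> last w \<Longrightarrow> \<exists>b y. w = b @ [y, True] \<and> length b = length w - 2"
proof -
  assume a: "length w \<ge> 2" "last w"
  have ne: "w \<noteq> []" using a by auto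
  have w1: "w = butlast w @ [True]" using a ne by (metis append_butlast_last_id)
  have ne2: "butlast w \<noteq> []" using a by (cases w rule: rev_cases) auto
  have w2: "butlast w = butlast (butlast w) @ [last (butlast w)]" using ne2 by simp
  have "w = butlast (butlast w) @ [last (butlast w), True]" using w1 w2 by (metis append.assoc append_Cons append_Nil)
  then show ?thesis by (intro exI[of _ "butlast (butlast w)"] exI[of _ "last (butlast w)"]) auto
qed

definition domc :: "bool list \<Rightarrow> bool list \<Rightarrow> bool" where
  "domc a b \<longleftrightarrow> length a = length b \<and> cT a = cT b \<and> (\<forall>y \<le> length a. cT (take y a) \<le> cT (take y b))"

definition code1 :: "nat list \<Rightarrow> bool list" where "code1 rl = butlast (tl (bits (odds rl)))"
definition code2 :: "nat list \<Rightarrow> bool list" where "code2 rl = butlast (butlast (bits (evns rl)))"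
definition dec :: "bool list \<Rightarrow> bool list \<Rightarrow> nat list" where
  "dec a b = inter (ub 0 (False # a @ [True])) (ub 0 (b @ [False, True]))"

lemma E1:
  assumes ok: "okrl 0 rl" and pos: "\<forall>r\<in>set rl. 0 < r" and big: "sum_list rl \<ge> 4"
  shows "domc (code1 rl) (code2 rl) \<and> dec (code1 rl) (code2 rl) = rl"
proof -
  define u where "u = odds rl"
  define d where "d = evns rl"
  have okc: "rl \<noteq> [] \<and> even (length rl) \<and> 0 + int (sum_list u) = int (sum_list d)
   \<and> (\<forall>j. 0 < j \<and> j < length rl div 2 \<longrightarrow> int (sum_list (take j d)) < 0 + int (sum_list (take j u)))"
    using ok okrl_iff[of 0 rl] unfolding u_def d_def by blast
  have ev: "even (length rl)" using okc by blast
  have lud: "length u = length d" using length_odds_evns[OF ev] unfolding u_def d_def .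
  have lr: "length rl = length u + length d" using length_odds_evns2[of rl] unfolding u_def d_def .
  have ldiv: "length rl div 2 = length u" using lr lud by simp
  define n where "n = sum_list u"
  have sd: "sum_list d = n" using okc unfolding n_def by simp
  have srl: "sum_list rl = 2 * n" using sum_odds_evns[of rl] sd unfolding u_def d_def n_def by simp
  have n2: "n \<ge> 2" using srl big by simp
  have pu: "\<forall>r\<in>set u. 0 < r" using pos set_odds[of rl] unfolding u_def by blast
  have pd: "\<forall>r\<in>set d. 0 < r" using pos set_evns[of rl] unfolding d_def by blast
  have I: "\<forall>j. 0 < j \<and> j < length u \<longrightarrow> sum_list (take j d) < sum_list (take j u)"
    using okc ldiv by auto
  have II: "\<forall>x. 1 \<le> x \<and> x < n \<longrightarrow> cT (take x (bits u)) \<le> cT (take (x - 1) (bits d))"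
    using bridge[OF pu pd lud n_def[symmetric] sd] I by blast
  have une: "u \<noteq> []" using okc lr lud by auto
  have dne: "d \<noteq> []" using une lud by auto
  have la: "length (bits u) = n" using length_bits[OF pu] n_def by simp
  have lb: "length (bits d) = n" using length_bits[OF pd] sd by simp
  obtain x0 a where A: "bits u = x0 # a @ [True]" "length a = n - 2"
    using decomp1[of "bits u"] la n2 bits_last[OF une] by auto
  obtain b y where B: "bits d = b @ [y, True]" "length b = n - 2"
    using decomp2[of "bits d"] lb n2 bits_last[OF dne] by auto
  have "cT (take 1 (bits u)) \<le> cT (take 0 (bits d))" using II[rule_format, of 1] n2 by simp
  then have x0: "x0 = False" using A by (cases x0) auto
  have "cT (take (n - 1) (bits u)) \<le> cT (take (n - 1 - 1) (bits d))" using II[rule_format, of "n - 1"] n2 by simp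
  moreover have "take (n - 1) (bits u) = x0 # a"
  proof -
    obtain m where m: "n = 2 + m" using n2 le_Suc_ex by blast
    then show ?thesis using A by simp
  qed
  moreover have "take (n - 1 - 1) (bits d) = b" using B by simp
  ultimately have cab: "cT a \<le> cT b" using x0 by simp
  have "cT (bits u) = cT (bits d)" using cT_bits[of u] cT_bits[of d] lud by simp
  then have yF: "y = False" and cab2: "cT a = cT b" using A B x0 cab by (cases y; auto)+
  have dom: "\<forall>y' \<le> length a. cT (take y' a) \<le> cT (take y' b)"
  proof (intro allI impI)
    fix y' assume y': "y' \<le> length a"
    have "cT (take (Suc y') (bits u)) \<le> cT (take (Suc y' - 1) (bits d))"
      using II[rule_format, of "Suc y'"] y' A n2 by simp
    moreover have "take (Suc y') (bits u) = x0 # take y' a" using A y' by simp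
    moreover have "take y' (bits d) = take y' b" using B y' A by simp
    ultimately show "cT (take y' a) \<le> cT (take y' b)" using x0 by simp
  qed
  have c1: "code1 rl = a" unfolding code1_def u_def[symmetric] using A by simp
  have c2: "code2 rl = b" unfolding code2_def d_def[symmetric] using B bb by simp
  have "dec a b = inter (ub 0 (bits u)) (ub 0 (bits d))" unfolding dec_def using A B x0 yF by simp
  also have "\<dots> = rl" using ub_bits[OF pu] ub_bits[OF pd] inter_odds_evns[OF ev] unfolding u_def d_def by simp
  finally show ?thesis using c1 c2 dom cab2 A B unfolding domc_def by simp
qed

lemma E2:
  assumes dm: "domc a b"
  shows "okrl 0 (dec a b) \<and> (\<forall>r\<in>set (dec a b). 0 < r) \<and> sum_list (dec a b) = 2 * (length a + 2)
    \<and> length (dec a b) = 2 * Suc (cT a) \<and> length (filter (\<lambda>r. 2 \<le> r) (dec a b)) = Suc (tf a) + Suc (ft b)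
    \<and> code1 (dec a b) = a \<and> code2 (dec a b) = b"
proof -
  define n where "n = length a + 2"
  define al where "al = False # a @ [True]"
  define be where "be = b @ [False, True]"
  define u where "u = ub 0 al"
  define d where "d = ub 0 be"
  have lab: "length a = length b" and cab: "cT a = cT b" and dom: "\<forall>y \<le> length a. cT (take y a) \<le> cT (take y b)"
    using dm unfolding domc_def by auto
  have bu: "bits u = al" unfolding u_def al_def using bits_ub[of "False # a @ [True]" 0] by simp
  have bd: "bits d = be" unfolding d_def be_def using bits_ub[of "b @ [False, True]" 0] by simp
  have pu: "\<forall>r\<in>set u. 0 < r" unfolding u_def using ub_pos by blast
  have pd: "\<forall>r\<in>set d. 0 < r" unfolding d_def using ub_pos by blast
  have lu: "length u = Suc (cT a)" unfolding u_def al_def length_ub by simp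
  have ld: "length d = Suc (cT a)" unfolding d_def be_def length_ub using cab by simp
  have lud: "length u = length d" using lu ld by simp
  have su: "sum_list u = n" unfolding u_def n_def al_def by (subst sum_ub) auto
  have sd: "sum_list d = n" unfolding d_def n_def be_def using lab by (subst sum_ub) auto
  have II: "\<forall>x. 1 \<le> x \<and> x < n \<longrightarrow> cT (take x (bits u)) \<le> cT (take (x - 1) (bits d))"
  proof (intro allI impI)
    fix x assume x: "1 \<le> x \<and> x < n"
    then obtain x' where xx: "x = Suc x'" by (cases x) auto
    have "take x (bits u) = False # take x' a" using x xx unfolding bu al_def n_def by simp
    moreover have "take (x - 1) (bits d) = take x' b" using x xx lab unfolding bd be_def n_def by simp
    moreover have "cT (take x' a) \<le> cT (take x' b)" using dom x xx unfolding n_def by simp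
    ultimately show "cT (take x (bits u)) \<le> cT (take (x - 1) (bits d))" by simp
  qed
  have I: "\<forall>j. 0 < j \<and> j < length u \<longrightarrow> sum_list (take j d) < sum_list (take j u)"
    using bridge[OF pu pd lud su sd] II by blast
  define rl where "rl = inter u d"
  have rl_dec: "dec a b = rl" unfolding rl_def dec_def u_def d_def al_def be_def ..
  have ou: "odds rl = u" unfolding rl_def using odds_inter[OF lud] .
  have ed: "evns rl = d" unfolding rl_def using evns_inter[OF lud] .
  have lrl: "length rl = length u + length d" unfolding rl_def using length_inter[OF lud] .
  have ok: "okrl 0 rl"
    unfolding okrl_iff ou ed using lrl lud lu I su sd by auto
  have prl: "\<forall>r\<in>set rl. 0 < r" unfolding rl_def using set_inter[of u d] pu pd by blast
  have srl: "sum_list rl = 2 * (length a + 2)" using sum_odds_evns[of rl] ou ed su sd n_def by simp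
  have ftal: "ft al = Suc (tf a)"
  proof -
    have "ft (False # a @ [True]) + 0 = Suc (tf (False # a))" using ft_FaT[of False a] by simp
    moreover have "tf (False # a) = tf a" by (simp add: tf_Cons split: list.split)
    ultimately show ?thesis unfolding al_def by simp
  qed
  have ftbe: "ft be = Suc (ft b)" unfolding be_def by (rule ft_bFT)
  have flt: "length (filter (\<lambda>r. 2 \<le> r) rl) = Suc (tf a) + Suc (ft b)"
    using filter_odds_evns[of "\<lambda>r. 2 \<le> r" rl] ou ed ft_bits[OF pu] ft_bits[OF pd] bu bd ftal ftbe by simp
  have c1: "code1 rl = a" unfolding code1_def ou bu al_def by simp
  have c2: "code2 rl = b" unfolding code2_def ed bd be_def by (rule bb)
  show ?thesis unfolding rl_dec using ok prl srl lrl lu ld flt c1 c2 by simp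
qed

definition Phi :: "nat list \<Rightarrow> nat list" where
  "Phi rl = dec (map Not (code2 rl)) (map Not (code1 rl))"

lemma domc_not: "domc a b \<Longrightarrow> domc (map Not b) (map Not a)"
  unfolding domc_def
proof (intro conjI allI impI)
  assume a: "length a = length b \<and> cT a = cT b \<and> (\<forall>y\<le>length a. cT (take y a) \<le> cT (take y b))"
  show "length (map Not b) = length (map Not a)" using a by simp
  show "cT (map Not b) = cT (map Not a)" using a by (simp add: cT_map_Not)
  fix y assume y: "y \<le> length (map Not b)"
  have c: "cT (take y a) \<le> cT (take y b)" using a y by simp
  have "cT (take y (map Not b)) = y - cT (take y b)" using y by (simp add: take_map cT_map_Not)
  moreover have "cT (take y (map Not a)) = y - cT (take y a)" using y a by (simp add: take_map cT_map_Not)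
  ultimately show "cT (take y (map Not b)) \<le> cT (take y (map Not a))"
    using c by (simp add: diff_le_mono2)
qed

lemma Phi_props:
  assumes ok: "okrl 0 rl" and pos: "\<forall>r\<in>set rl. 0 < r" and big: "sum_list rl \<ge> 4"
  shows "okrl 0 (Phi rl) \<and> (\<forall>r\<in>set (Phi rl). 0 < r) \<and> sum_list (Phi rl) = sum_list rl
    \<and> length (Phi rl) = sum_list rl - length rl
    \<and> length (filter (\<lambda>r. 2 \<le> r) (Phi rl)) = length (filter (\<lambda>r. 2 \<le> r) rl)
    \<and> Phi (Phi rl) = rl"
proof -
  define a where "a = code1 rl"
  define b where "b = code2 rl"
  have e1: "domc a b" "dec a b = rl" using E1[OF ok pos big] unfolding a_def b_def by auto
  have e2: "sum_list (dec a b) = 2 * (length a + 2)" "length (dec a b) = 2 * Suc (cT a)"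
    "length (filter (\<lambda>r. 2 \<le> r) (dec a b)) = Suc (tf a) + Suc (ft b)"
    using E2[OF e1(1)] by auto
  have dn: "domc (map Not b) (map Not a)" using domc_not[OF e1(1)] .
  have e3: "okrl 0 (dec (map Not b) (map Not a))" "\<forall>r\<in>set (dec (map Not b) (map Not a)). 0 < r"
    "sum_list (dec (map Not b) (map Not a)) = 2 * (length (map Not b) + 2)"
    "length (dec (map Not b) (map Not a)) = 2 * Suc (cT (map Not b))"
    "length (filter (\<lambda>r. 2 \<le> r) (dec (map Not b) (map Not a))) = Suc (tf (map Not b)) + Suc (ft (map Not a))"
    "code1 (dec (map Not b) (map Not a)) = map Not b" "code2 (dec (map Not b) (map Not a)) = map Not a"
    using E2[OF dn] by auto
  have P: "Phi rl = dec (map Not b) (map Not a)" unfolding Phi_def a_def b_def ..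
  have lab: "length a = length b" "cT a = cT b" using e1(1) unfolding domc_def by auto
  have cle: "cT a \<le> length a" by (rule cT_le)
  have "Phi (Phi rl) = dec (map Not (code2 (Phi rl))) (map Not (code1 (Phi rl)))" by (rule Phi_def)
  also have "\<dots> = dec a b" unfolding P e3(6) e3(7) by (simp add: comp_def)
  finally have PP: "Phi (Phi rl) = rl" using e1(2) by simp
  show ?thesis
    unfolding P using e3(1-5) e2 e1(2) lab cle PP[unfolded P] by (auto simp: cT_map_Not ft_not tf_not)
qed

definition Psi :: "int list \<Rightarrow> int list" where
  "Psi xs = expand (hd xs) (Phi (runlens xs))"

lemma exc_expand: "s \<in> {1,-1} \<Longrightarrow> exc (expand s rl) = exc (expand 1 rl)"
  using expand_neg[of 1 rl] exc_neg[of "expand 1 rl"] by auto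

lemma length_le_sum: "\<forall>r\<in>set rl. 0 < r \<Longrightarrow> length rl \<le> sum_list (rl :: nat list)"
  by (induction rl) auto

lemma Psi_props:
  assumes s: "set xs \<subseteq> {1,-1}" and e: "exc xs" and N: "length xs \<ge> 4"
  shows "set (Psi xs) \<subseteq> {1,-1} \<and> length (Psi xs) = length xs \<and> exc (Psi xs)
    \<and> num_runs (Psi xs) = length xs - num_runs xs \<and> num_long_runs (Psi xs) = num_long_runs xs
    \<and> Psi (Psi xs) = xs"
proof -
  have ne: "xs \<noteq> []" using e unfolding exc_def by auto
  define sg where "sg = hd xs"
  have sg: "sg \<in> {1,-1}" using s ne unfolding sg_def by (meson hd_in_set subsetD)
  define rl where "rl = runlens xs"
  have xs: "xs = expand sg rl" unfolding sg_def rl_def using expand_runlens[OF ne s] by simp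
  have pos: "\<forall>r\<in>set rl. 0 < r" unfolding rl_def by (rule runlens_pos)
  have srl: "sum_list rl = length xs" unfolding rl_def by (rule sum_runlens)
  have rlne: "rl \<noteq> []" unfolding rl_def using runlens_ne[OF ne] .
  have e1: "exc (expand 1 rl)" using e xs exc_expand[OF sg] by simp
  have s1: "set (expand 1 rl) \<subseteq> {1,-1}" using set_expand[of 1 rl] by simp
  have h1: "hd (expand 1 rl) = 1" using hd_expand[OF rlne] pos rlne by simp
  have "pz 0 (expand 1 rl)" using exc_pz[OF s1 h1 e1] .
  then have ok: "okrl 0 rl" using pz_expand[of 0 rl] pos by simp
  have big: "sum_list rl \<ge> 4" using srl N by simp
  note PP = Phi_props[OF ok pos big]
  define rl' where "rl' = Phi rl"
  have pos': "\<forall>r\<in>set rl'. 0 < r" using PP unfolding rl'_def by blast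
  have ok': "okrl 0 rl'" using PP unfolding rl'_def by blast
  have rl'ne: "rl' \<noteq> []" using ok' by (cases rl') auto
  have Ps: "Psi xs = expand sg rl'" unfolding Psi_def rl'_def rl_def sg_def ..
  have sg0: "sg \<noteq> 0" using sg by auto
  have rr: "runlens (Psi xs) = rl'" unfolding Ps using runlens_expand[OF sg0 pos'] .
  have hh: "hd (Psi xs) = sg" unfolding Ps using hd_expand[OF rl'ne] pos' rl'ne by simp
  have "pz 0 (expand 1 rl')" using pz_expand[of 0 rl'] pos' ok' by simp
  then have "exc (expand 1 rl')" by (rule pz_exc)
  then have ex': "exc (Psi xs)" unfolding Ps using exc_expand[OF sg] by simp
  have st: "set (Psi xs) \<subseteq> {1,-1}" unfolding Ps using set_expand[of sg rl'] sg by auto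
  have lp: "length (Psi xs) = length xs" unfolding Ps length_expand using PP srl unfolding rl'_def by simp
  have nr: "num_runs (Psi xs) = length xs - num_runs xs"
    unfolding num_runs_def rr using PP srl unfolding rl'_def rl_def by simp
  have nl: "num_long_runs (Psi xs) = num_long_runs xs"
    unfolding num_long_runs_def rr using PP unfolding rl'_def rl_def by simp
  have "Psi (Psi xs) = expand (hd (Psi xs)) (Phi (runlens (Psi xs)))" by (rule Psi_def)
  also have "\<dots> = expand sg (Phi rl')" using rr hh by simp
  also have "\<dots> = xs" using PP xs unfolding rl'_def by simp
  finally show ?thesis using ex' st lp nr nl by blast
qed

definition SS :: "nat \<Rightarrow> nat \<Rightarrow> nat \<Rightarrow> int list set" where
  "SS N r l = {xs. set xs \<subseteq> {1,-1} \<and> length xs = N \<and> exc xs \<and> num_runs xs = r \<and> num_long_runs xs = l}"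

lemma finite_SS: "finite (SS N r l)"
proof -
  have "SS N r l \<subseteq> {xs. set xs \<subseteq> {1,-1} \<and> length xs = N}" unfolding SS_def by auto
  moreover have "finite {xs. set xs \<subseteq> {1::int,-1} \<and> length xs = N}" by (rule finite_lists_length_eq) simp
  ultimately show ?thesis by (rule finite_subset)
qed

lemma num_runs_le: "num_runs xs \<le> length xs"
  unfolding num_runs_def using length_le_sum[OF runlens_pos[of xs]] sum_runlens[of xs] by simp

lemma card_SS_le: "N \<ge> 4 \<Longrightarrow> r \<le> N \<Longrightarrow> card (SS N r l) \<le> card (SS N (N - r) l)"
proof -
  assume N: "N \<ge> 4" and r: "r \<le> N"
  have "inj_on Psi (SS N r l)"
  proof (rule inj_onI)
    fix x y assume x: "x \<in> SS N r l" and y: "y \<in> SS N r l" and e: "Psi x = Psi y"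
    have "Psi (Psi x) = x" using Psi_props[of x] x N unfolding SS_def by auto
    moreover have "Psi (Psi y) = y" using Psi_props[of y] y N unfolding SS_def by auto
    ultimately show "x = y" using e by metis
  qed
  moreover have "Psi ` SS N r l \<subseteq> SS N (N - r) l"
    using Psi_props N unfolding SS_def by auto
  ultimately show ?thesis using card_inj_on_le finite_SS by blast
qed

lemma card_SS: "N \<ge> 4 \<Longrightarrow> card (SS N r l) = card (SS N (N - r) l)"
proof (cases "r \<le> N")
  case True
  assume N: "N \<ge> 4"
  have "card (SS N r l) \<le> card (SS N (N - r) l)" using card_SS_le[OF N True] .
  moreover have "card (SS N (N - r) l) \<le> card (SS N (N - (N - r)) l)" using card_SS_le[OF N, of "N - r" l] by simp
  ultimately show ?thesis using True by simp
next
  case False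
  assume N: "N \<ge> 4"
  have "xs \<notin> SS N r l" for xs
  proof
    assume "xs \<in> SS N r l"
    then have "num_runs xs = r" "length xs = N" by (auto simp: SS_def)
    then show False using num_runs_le[of xs] False by simp
  qed
  then have "SS N r l = {}" by blast
  moreover have "SS N (N - r) l = {}"
  proof -
    have "num_runs xs \<noteq> 0" if "xs \<noteq> []" for xs using runlens_ne[OF that] unfolding num_runs_def by simp
    moreover have "N - r = 0" using False by simp
    ultimately show ?thesis unfolding SS_def exc_def by (metis (mono_tags, lifting) Collect_empty_eq less_numeral_extra(3))
  qed
  ultimately show ?thesis by simp
qed

lemma even_sum: "set xs \<subseteq> {1,-1::int} \<Longrightarrow> even (sum_list xs) = even (length xs)"
proof -
  assume a: "set xs \<subseteq> {1,-1}"
  have "(sum_list xs - int (length xs)) mod 2 = 0" using a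
  proof (induction xs)
    case (Cons x xs)
    have "x = 1 \<or> x = -1" using Cons by auto
    moreover have "(sum_list xs - int (length xs)) mod 2 = 0" using Cons by auto
    ultimately show ?case by auto
  qed simp
  then show ?thesis by presburger
qed

lemma exc_even: "set xs \<subseteq> {1,-1} \<Longrightarrow> exc xs \<Longrightarrow> even (length xs)"
  using even_sum[of xs] unfolding exc_def by auto

definition wt :: "real \<Rightarrow> bool list \<Rightarrow> real" where
  "wt p cs = prod_list (map (\<lambda>c. if c then p else 1 - p) cs)"

abbreviation SM :: "real \<Rightarrow> bool stream measure" where
  "SM p \<equiv> stream_space (measure_pmf (bernoulli_pmf p))"

lemma sets_SM: "sets (SM p) = sets (stream_space (count_space UNIV))"
  by (rule sets_stream_space_cong) simp

lemma space_SM[simp]: "space (SM p) = UNIV"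
  by (simp add: space_stream_space)

lemma meas_stake: "stake m \<in> measurable (SM p) (count_space UNIV)"
  using measurable_stake[of m] measurable_cong_sets[OF sets_SM refl] by blast

lemma sets_stake: "{X. stake m X = cs} \<in> sets (SM p)"
proof -
  have "stake m -` {cs} \<inter> space (SM p) \<in> sets (SM p)" by (rule measurable_sets[OF meas_stake]) simp
  moreover have "stake m -` {cs} \<inter> space (SM p) = {X. stake m X = cs}" by auto
  ultimately show ?thesis by simp
qed

lemma prob_SM: "prob_space (SM p)"
  by (rule prob_space.prob_space_stream_space[OF prob_space_measure_pmf])

lemma emeasure_stake:
  assumes p: "0 \<le> p" "p \<le> 1"
  shows "emeasure (SM p) {X. stake (length cs) X = cs} = ennreal (wt p cs)"
proof (induction cs)
  case Nil
  interpret S: prob_space "SM p" by (rule prob_SM)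
  have "{X. stake (length []) X = []} = space (SM p)" by simp
  then show ?case using S.emeasure_space_1 by (simp add: wt_def)
next
  case (Cons c cs)
  have meas: "{X. stake (length (c # cs)) X = c # cs} \<in> sets (SM p)" by (rule sets_stake)
  have "emeasure (SM p) {X. stake (length (c # cs)) X = c # cs}
      = (\<integral>\<^sup>+t. emeasure (SM p) {x \<in> space (SM p). t ## x \<in> {X. stake (length (c # cs)) X = c # cs}} \<partial>measure_pmf (bernoulli_pmf p))"
    using prob_space.emeasure_stream_space[OF prob_space_measure_pmf meas] .
  also have "\<dots> = (\<integral>\<^sup>+t. emeasure (SM p) {X. stake (length cs) X = cs} * indicator {c} t \<partial>measure_pmf (bernoulli_pmf p))"
    by (intro nn_integral_cong) (auto split: split_indicator)
  also have "\<dots> = emeasure (SM p) {X. stake (length cs) X = cs} * emeasure (measure_pmf (bernoulli_pmf p)) {c}"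
    by (rule nn_integral_cmult_indicator) simp
  also have "\<dots> = ennreal (wt p cs) * ennreal (pmf (bernoulli_pmf p) c)"
    using Cons by (simp add: emeasure_pmf_single)
  also have "\<dots> = ennreal (wt p (c # cs))"
    using p by (cases c) (auto simp: wt_def ennreal_mult'[symmetric] mult.commute)
  finally show ?case .
qed

lemma wt_nonneg: "0 \<le> p \<Longrightarrow> p \<le> 1 \<Longrightarrow> 0 \<le> wt p cs"
  unfolding wt_def by (induction cs) auto

lemma prob_PRW: "prob_space (PRW a)"
  unfolding PRW_def by (rule prob_space_pair[OF prob_space_measure_pmf prob_SM])

lemma space_PRW[simp]: "space (PRW a) = UNIV"
  unfolding PRW_def by (simp add: space_pair_measure)

definition cyl :: "nat \<Rightarrow> bool \<times> bool list \<Rightarrow> (bool \<times> bool stream) set" where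
  "cyl m z = {\<omega>. fst \<omega> = fst z \<and> stake m (snd \<omega>) = snd z}"

lemma cyl_eq: "cyl m z = {fst z} \<times> {X. stake m X = snd z}"
  unfolding cyl_def by auto

lemma sets_cyl: "cyl m z \<in> sets (PRW a)"
  unfolding cyl_eq PRW_def by (rule pair_measureI) (auto intro: sets_stake)

lemma measure_cyl:
  assumes "0 \<le> a" "a \<le> 1" "length (snd z) = m"
  shows "measure (PRW a) (cyl m z) = 1/2 * wt a (snd z)"
proof -
  interpret S: prob_space "SM a" by (rule prob_SM)
  have "emeasure (PRW a) (cyl m z) = emeasure (measure_pmf (bernoulli_pmf (1/2))) {fst z} * emeasure (SM a) {X. stake m X = snd z}"
    unfolding cyl_eq PRW_def by (rule S.emeasure_pair_measure_Times) (auto intro: sets_stake)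
  also have "\<dots> = ennreal (1/2) * ennreal (wt a (snd z))"
    using emeasure_stake[OF assms(1,2), of "snd z"] assms(3) by (cases "fst z") (auto simp: emeasure_pmf_single)
  also have "\<dots> = ennreal (1/2 * wt a (snd z))" using wt_nonneg[OF assms(1,2)] by (intro ennreal_mult[symmetric]) auto
  finally show ?thesis unfolding measure_def using wt_nonneg[OF assms(1,2)] by simp
qed

lemma integral_cyl:
  fixes f :: "bool \<times> bool list \<Rightarrow> 'b::{banach, second_countable_topology}"
  assumes "0 \<le> a" "a \<le> 1"
  shows "integral\<^sup>L (PRW a) (\<lambda>\<omega>. f (fst \<omega>, stake m (snd \<omega>))) = (\<Sum>z\<in>UNIV \<times> {cs. length cs = m}. (1/2 * wt a (snd z)) *\<^sub>R f z)"
proof -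
  interpret P: prob_space "PRW a" by (rule prob_PRW)
  define Z where "Z = (UNIV :: bool set) \<times> {cs :: bool list. length cs = m}"
  have "finite {cs :: bool list. length cs = m}" using finite_lists_length_eq[of "UNIV :: bool set" m] by simp
  then have fin: "finite Z" unfolding Z_def by (intro finite_cartesian_product) auto
  have eq: "f (fst \<omega>, stake m (snd \<omega>)) = (\<Sum>z\<in>Z. indicator (cyl m z) \<omega> *\<^sub>R f z)" for \<omega>
  proof -
    have "(\<Sum>z\<in>Z. indicator (cyl m z) \<omega> *\<^sub>R f z) = (\<Sum>z\<in>Z. if z = (fst \<omega>, stake m (snd \<omega>)) then f z else 0)"
      by (intro sum.cong refl) (auto simp: cyl_def split: split_indicator)
    also have "\<dots> = f (fst \<omega>, stake m (snd \<omega>))" using fin by (simp add: Z_def)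
    finally show ?thesis by simp
  qed
  have "integral\<^sup>L (PRW a) (\<lambda>\<omega>. f (fst \<omega>, stake m (snd \<omega>))) = integral\<^sup>L (PRW a) (\<lambda>\<omega>. \<Sum>z\<in>Z. indicator (cyl m z) \<omega> *\<^sub>R f z)"
    using eq by simp
  also have "\<dots> = (\<Sum>z\<in>Z. integral\<^sup>L (PRW a) (\<lambda>\<omega>. indicator (cyl m z) \<omega> *\<^sub>R f z))"
    by (rule Bochner_Integration.integral_sum[where I=Z and f="\<lambda>z \<omega>. indicator (cyl m z) \<omega> *\<^sub>R f z"]) (auto intro!: integrable_scaleR_left integrable_real_indicator sets_cyl simp: less_top[symmetric] P.emeasure_finite)
  also have "\<dots> = (\<Sum>z\<in>Z. (1/2 * wt a (snd z)) *\<^sub>R f z)"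
  proof (intro sum.cong refl)
    fix z assume z: "z \<in> Z"
    have "integral\<^sup>L (PRW a) (\<lambda>\<omega>. indicator (cyl m z) \<omega> *\<^sub>R f z) = integral\<^sup>L (PRW a) (indicator (cyl m z)) *\<^sub>R f z"
    proof (rule integral_scaleR_left)
      show "integrable (PRW a) (indicator (cyl m z) :: _ \<Rightarrow> real)"
        by (intro integrable_real_indicator sets_cyl) (simp add: less_top[symmetric] P.emeasure_finite)
    qed
    also have "\<dots> = measure (PRW a) (cyl m z) *\<^sub>R f z" by simp
    also have "\<dots> = (1/2 * wt a (snd z)) *\<^sub>R f z"
    proof -
      have "length (snd z) = m" using z unfolding Z_def by auto
      then show ?thesis using measure_cyl[OF assms, of z m] by simp
    qed
    finally show "integral\<^sup>L (PRW a) (\<lambda>\<omega>. indicator (cyl m z) \<omega> *\<^sub>R f z) = (1/2 * wt a (snd z)) *\<^sub>R f z" .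
  qed
  finally show ?thesis unfolding Z_def .
qed

lemma meas_cylfun: "(\<lambda>\<omega>. (fst \<omega>, stake m (snd \<omega>))) \<in> measurable (PRW a) (count_space UNIV)"
proof (rule measurable_count_space_eq2_countable[THEN iffD2], safe)
  fix z :: "bool \<times> bool list"
  have "(\<lambda>\<omega>. (fst \<omega>, stake m (snd \<omega>))) -` {z} \<inter> space (PRW a) = cyl m z"
  proof (intro set_eqI)
    fix \<omega> :: "bool \<times> bool stream"
    show "\<omega> \<in> (\<lambda>\<omega>. (fst \<omega>, stake m (snd \<omega>))) -` {z} \<inter> space (PRW a) \<longleftrightarrow> \<omega> \<in> cyl m z"
      unfolding cyl_def space_PRW by (cases z) auto
  qed
  then show "(\<lambda>\<omega>. (fst \<omega>, stake m (snd \<omega>))) -` {z} \<inter> space (PRW a) \<in> sets (PRW a)" using sets_cyl by simp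
qed auto

definition sg :: "bool \<Rightarrow> int" where "sg b = (if b then 1 else -1)"

fun pth :: "int \<Rightarrow> bool list \<Rightarrow> int list" where
  "pth s [] = [s]"
| "pth s (c # cs) = s # pth (if c then s else -s) cs"

definition pfx :: "bool \<times> bool stream \<Rightarrow> nat \<Rightarrow> int list" where
  "pfx \<omega> N = map (eps \<omega>) [1..<N+1]"

lemma pfx_pth_gen: "map (eps \<omega>) [Suc k..<Suc k + Suc m] = pth (eps \<omega> (Suc k)) (stake m (sdrop k (snd \<omega>)))"
proof (induction m arbitrary: k)
  case 0
  then show ?case by simp
next
  case (Suc m)
  have "[Suc k..<Suc k + Suc (Suc m)] = Suc k # [Suc (Suc k)..<Suc (Suc k) + Suc m]"
    by (simp add: upt_conv_Cons)
  then have "map (eps \<omega>) [Suc k..<Suc k + Suc (Suc m)] = eps \<omega> (Suc k) # pth (eps \<omega> (Suc (Suc k))) (stake m (sdrop (Suc k) (snd \<omega>)))"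
    using Suc[of "Suc k"] by simp
  moreover have "stake (Suc m) (sdrop k (snd \<omega>)) = (snd \<omega> !! k) # stake m (sdrop (Suc k) (snd \<omega>))"
    by (simp add: sdrop_snth)
  moreover have "eps \<omega> (Suc (Suc k)) = (if snd \<omega> !! k then eps \<omega> (Suc k) else - eps \<omega> (Suc k))" by simp
  ultimately show ?case by simp
qed

lemma pfx_pth: "pfx \<omega> (Suc m) = pth (sg (fst \<omega>)) (stake m (snd \<omega>))"
  using pfx_pth_gen[of \<omega> 0 m] unfolding pfx_def sg_def by simp

lemma pfx_0: "pfx \<omega> 0 = []" unfolding pfx_def by simp

lemma length_pfx[simp]: "length (pfx \<omega> N) = N" unfolding pfx_def by simp

lemma set_pth: "s \<in> {1,-1} \<Longrightarrow> set (pth s cs) \<subseteq> {1,-1}"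
  by (induction s cs rule: pth.induct) auto

lemma length_pth[simp]: "length (pth s cs) = Suc (length cs)"
  by (induction s cs rule: pth.induct) auto

lemma hd_pth[simp]: "hd (pth s cs) = s"
  by (cases cs) auto

lemma set_pfx: "set (pfx \<omega> N) \<subseteq> {1,-1}"
  by (cases N) (auto simp: pfx_0 pfx_pth sg_def intro!: set_pth)

fun W :: "real \<Rightarrow> int list \<Rightarrow> real" where
  "W a (x # y # zs) = (if x = y then a else 1 - a) * W a (y # zs)"
| "W a _ = 1"

lemma W_pth: "s \<noteq> 0 \<Longrightarrow> W a (pth s cs) = wt a cs"
proof (induction s cs rule: pth.induct)
  case (2 s c cs)
  define s' where "s' = (if c then s else -s)"
  obtain y ys where yy: "pth s' cs = y # ys" by (cases cs) auto
  have ys': "y = s'" using hd_pth[of s' cs] yy by simp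
  have "W a (pth s (c # cs)) = W a (s # y # ys)" using yy unfolding s'_def by simp
  also have "\<dots> = (if s = y then a else 1 - a) * W a (y # ys)" by simp
  also have "\<dots> = (if c then a else 1 - a) * W a (pth s' cs)" using yy ys' 2(2) unfolding s'_def by auto
  also have "\<dots> = (if c then a else 1 - a) * wt a cs" using 2 unfolding s'_def by auto
  finally show ?case by (simp add: wt_def)
qed (simp add: wt_def)

definition LL :: "nat \<Rightarrow> int list set" where
  "LL N = {xs. set xs \<subseteq> {1,-1} \<and> length xs = N}"

lemma finite_LL: "finite (LL N)"
  unfolding LL_def by (rule finite_lists_length_eq) simp

fun coinsf :: "int list \<Rightarrow> bool list" where
  "coinsf (x # y # zs) = (x = y) # coinsf (y # zs)"
| "coinsf _ = []"

lemma pth_coinsf: "xs \<noteq> [] \<Longrightarrow> set xs \<subseteq> {1,-1} \<Longrightarrow> pth (hd xs) (coinsf xs) = xs"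
proof (induction xs rule: coinsf.induct)
  case (1 x y zs)
  have "(if x = y then x else -x) = y" using 1(3) by auto
  then show ?case using 1 by simp
qed auto

lemma length_coinsf: "length (coinsf xs) = length xs - 1"
  by (induction xs rule: coinsf.induct) auto

lemma pth_ne[simp]: "pth s cs \<noteq> []" "[] \<noteq> pth s cs"
  by (cases cs; auto)+

lemma pth_inj: "s \<noteq> 0 \<Longrightarrow> pth s cs = pth s' cs' \<Longrightarrow> s = s' \<and> cs = cs'"
proof (induction s cs arbitrary: s' cs' rule: pth.induct)
  case (1 s)
  then show ?case by (cases cs') auto
next
  case (2 s c cs)
  then obtain c' cs'' where cs': "cs' = c' # cs''" by (cases cs') auto
  have ss: "s = s'" using 2(3) cs' by simp
  have "pth (if c then s else -s) cs = pth (if c' then s' else -s') cs''" using 2(3) cs' by simp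
  moreover have "(if c then s else -s) \<noteq> 0" using 2(2) by simp
  ultimately have e: "(if c then s else -s) = (if c' then s' else -s') \<and> cs = cs''" using 2(1) by blast
  then have "c = c'" using ss 2(2) by (cases c; cases c'; auto)
  then show ?case using ss cs' e by simp
qed

lemma bij_pth: "bij_betw (\<lambda>z. pth (sg (fst z)) (snd z)) (UNIV \<times> {cs. length cs = m}) (LL (Suc m))"
proof (rule bij_betwI')
  fix x y :: "bool \<times> bool list" assume "x \<in> UNIV \<times> {cs. length cs = m}" "y \<in> UNIV \<times> {cs. length cs = m}"
  show "(pth (sg (fst x)) (snd x) = pth (sg (fst y)) (snd y)) = (x = y)"
  proof
    assume "pth (sg (fst x)) (snd x) = pth (sg (fst y)) (snd y)"
    then have "sg (fst x) = sg (fst y) \<and> snd x = snd y" by (intro pth_inj) (auto simp: sg_def)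
    then show "x = y" by (cases x; cases y; cases "fst x"; cases "fst y"; auto simp: sg_def)
  qed simp
next
  fix x :: "bool \<times> bool list" assume "x \<in> UNIV \<times> {cs. length cs = m}"
  moreover have "set (pth (sg (fst x)) (snd x)) \<subseteq> {1,-1}" by (rule set_pth) (simp add: sg_def)
  ultimately show "pth (sg (fst x)) (snd x) \<in> LL (Suc m)" unfolding LL_def by auto
next
  fix xs assume xs: "xs \<in> LL (Suc m)"
  then have ne: "xs \<noteq> []" and s: "set xs \<subseteq> {1,-1}" and l: "length xs = Suc m" unfolding LL_def by auto
  have h: "hd xs \<in> {1,-1}" using ne s by (meson hd_in_set subsetD)
  define b where "b = (hd xs = 1)"
  have "sg b = hd xs" using h unfolding b_def sg_def by auto
  then have "xs = pth (sg (fst (b, coinsf xs))) (snd (b, coinsf xs))" using pth_coinsf[OF ne s] by simp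
  moreover have "(b, coinsf xs) \<in> UNIV \<times> {cs. length cs = m}" using l by (simp add: length_coinsf)
  ultimately show "\<exists>z\<in>UNIV \<times> {cs. length cs = m}. xs = pth (sg (fst z)) (snd z)" by blast
qed

lemma integral_pfx:
  fixes F :: "int list \<Rightarrow> 'b::{banach, second_countable_topology}"
  assumes "0 \<le> a" "a \<le> 1"
  shows "integral\<^sup>L (PRW a) (\<lambda>\<omega>. F (pfx \<omega> (Suc m))) = (\<Sum>xs\<in>LL (Suc m). (1/2 * W a xs) *\<^sub>R F xs)"
proof -
  have "integral\<^sup>L (PRW a) (\<lambda>\<omega>. F (pfx \<omega> (Suc m))) = integral\<^sup>L (PRW a) (\<lambda>\<omega>. (\<lambda>z. F (pth (sg (fst z)) (snd z))) (fst \<omega>, stake m (snd \<omega>)))"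
    by (simp add: pfx_pth)
  also have "\<dots> = (\<Sum>z\<in>UNIV \<times> {cs. length cs = m}. (1/2 * wt a (snd z)) *\<^sub>R F (pth (sg (fst z)) (snd z)))"
    by (rule integral_cyl[OF assms])
  also have "\<dots> = (\<Sum>z\<in>UNIV \<times> {cs. length cs = m}. (\<lambda>xs. (1/2 * W a xs) *\<^sub>R F xs) (pth (sg (fst z)) (snd z)))"
    by (intro sum.cong refl) (simp add: W_pth sg_def)
  also have "\<dots> = (\<Sum>xs\<in>LL (Suc m). (1/2 * W a xs) *\<^sub>R F xs)"
    by (rule sum.reindex_bij_betw[OF bij_pth])
  finally show ?thesis .
qed

lemma meas_pfx: "(\<lambda>\<omega>. pfx \<omega> N) \<in> measurable (PRW a) (count_space UNIV)"
proof (cases N)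
  case 0
  then show ?thesis by (simp add: pfx_0)
next
  case (Suc m)
  have "(\<lambda>\<omega>. pfx \<omega> N) = (\<lambda>z. pth (sg (fst z)) (snd z)) \<circ> (\<lambda>\<omega>. (fst \<omega>, stake m (snd \<omega>)))"
    using Suc by (auto simp: pfx_pth)
  then show ?thesis using meas_cylfun by (simp add: measurable_comp)
qed

lemma sets_pfx: "{\<omega>. P (pfx \<omega> N)} \<in> sets (PRW a)"
proof -
  have "(\<lambda>\<omega>. pfx \<omega> N) -` {xs. P xs} \<inter> space (PRW a) \<in> sets (PRW a)"
    by (rule measurable_sets[OF meas_pfx]) simp
  then show ?thesis by (simp add: vimage_def)
qed

lemma measure_pfx:
  assumes "0 \<le> a" "a \<le> 1"
  shows "measure (PRW a) {\<omega>. P (pfx \<omega> (Suc m))} = (\<Sum>xs\<in>LL (Suc m). if P xs then 1/2 * W a xs else 0)"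
proof -
  have "measure (PRW a) {\<omega>. P (pfx \<omega> (Suc m))} = integral\<^sup>L (PRW a) (indicator {\<omega>. P (pfx \<omega> (Suc m))})"
    by simp
  also have "\<dots> = integral\<^sup>L (PRW a) (\<lambda>\<omega>. (\<lambda>xs. if P xs then 1 else 0 :: real) (pfx \<omega> (Suc m)))"
    by (intro Bochner_Integration.integral_cong refl) (auto split: split_indicator)
  also have "\<dots> = (\<Sum>xs\<in>LL (Suc m). (1/2 * W a xs) *\<^sub>R (if P xs then 1 else 0 :: real))"
    by (rule integral_pfx[OF assms])
  finally show ?thesis by (simp add: if_distrib cong: if_cong)
qed

definition ret :: "bool \<times> bool stream \<Rightarrow> bool" where
  "ret \<omega> \<longleftrightarrow> (\<exists>j\<ge>1. X \<omega> j = 0)"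

lemma X_pfx: "j \<le> N \<Longrightarrow> X \<omega> j = sum_list (take j (pfx \<omega> N))"
proof -
  assume j: "j \<le> N"
  have t: "take j [1..<N+1] = [1..<1+j]" using j by (intro take_upt) simp
  have "take j (pfx \<omega> N) = map (eps \<omega>) [1..<1+j]" unfolding pfx_def take_map t ..
  moreover have "sum_list (map (eps \<omega>) [1..<1+j]) = sum (eps \<omega>) (set [1..<1+j])"
    by (rule sum_set_upt_conv_sum_list_nat[symmetric])
  moreover have "set [1..<1+j] = {1..j}" by auto
  ultimately show ?thesis unfolding X_def by simp
qed

lemma X_pfx': "X \<omega> N = sum_list (pfx \<omega> N)"
  using X_pfx[of N N \<omega>] by simp

lemma exc_L: assumes "exc (pfx \<omega> N)" shows "ret \<omega> \<and> L \<omega> = N"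
proof -
  have N: "N \<ge> 1" using assms unfolding exc_def by (cases N) (auto simp: pfx_0)
  have XN: "X \<omega> N = 0" using assms X_pfx'[of \<omega> N] unfolding exc_def by simp
  have nz: "X \<omega> j \<noteq> 0" if "1 \<le> j" "j < N" for j
    using assms X_pfx[of j N \<omega>] that unfolding exc_def by auto
  define S where "S = {j. j \<ge> 1 \<and> X \<omega> j = 0}"
  have NS: "N \<in> S" using N XN unfolding S_def by simp
  have "L \<omega> = (LEAST j. j \<in> S)" unfolding L_def S_def by (simp add: Inf_nat_def)
  also have "\<dots> = N"
  proof (rule Least_equality)
    show "N \<in> S" by (rule NS)
    fix y assume y: "y \<in> S"
    show "N \<le> y"
    proof (rule ccontr)
      assume "\<not> N \<le> y"
      then have "y < N" by simp
      then show False using nz[of y] y unfolding S_def by auto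
    qed
  qed
  finally show ?thesis using N XN unfolding ret_def by auto
qed

lemma ret_L: assumes "ret \<omega>" shows "exc (pfx \<omega> (L \<omega>)) \<and> L \<omega> \<ge> 1"
proof -
  define S where "S = {j. j \<ge> 1 \<and> X \<omega> j = 0}"
  have ne: "\<exists>j. j \<in> S" using assms unfolding ret_def S_def by auto
  have LS: "L \<omega> = (LEAST j. j \<in> S)" unfolding L_def S_def by (simp add: Inf_nat_def)
  have LinS: "L \<omega> \<in> S" unfolding LS using ne by (rule LeastI_ex)
  have Lmin: "\<And>j. j \<in> S \<Longrightarrow> L \<omega> \<le> j" unfolding LS by (rule Least_le)
  have L1: "L \<omega> \<ge> 1" using LinS unfolding S_def by simp
  have "exc (pfx \<omega> (L \<omega>))" unfolding exc_def
  proof (intro conjI allI impI)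
    show "pfx \<omega> (L \<omega>) \<noteq> []" using L1 by (cases "L \<omega>") (auto simp: pfx_def)
    show "sum_list (pfx \<omega> (L \<omega>)) = 0" using LinS X_pfx'[of \<omega> "L \<omega>"] unfolding S_def by simp
    fix j assume j: "0 < j \<and> j < length (pfx \<omega> (L \<omega>))"
    then have "j < L \<omega>" by simp
    then have "j \<notin> S" using Lmin[of j] by auto
    then show "sum_list (take j (pfx \<omega> (L \<omega>))) \<noteq> 0" using j X_pfx[of j "L \<omega>" \<omega>] unfolding S_def by simp
  qed
  then show ?thesis using L1 by simp
qed

lemma steps_pfx: "steps \<omega> = pfx \<omega> (L \<omega>)"
  unfolding steps_def pfx_def by simp

lemma nret_L: "\<not> ret \<omega> \<Longrightarrow> L \<omega> = Inf ({} :: nat set)"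
proof -
  assume "\<not> ret \<omega>"
  then have e: "{j. j \<ge> 1 \<and> X \<omega> j = 0} = {}" unfolding ret_def by auto
  show ?thesis unfolding L_def e ..
qed

lemma sets_nret: "{\<omega>. \<not> ret \<omega>} \<in> sets (PRW a)"
proof -
  have eq: "\<not> ret \<omega> \<longleftrightarrow> (\<forall>m. sum_list (pfx \<omega> (Suc m)) \<noteq> 0)" for \<omega>
  proof
    assume "\<not> ret \<omega>"
    then show "\<forall>m. sum_list (pfx \<omega> (Suc m)) \<noteq> 0" unfolding ret_def using X_pfx' by (metis le_add1 plus_1_eq_Suc)
  next
    assume a: "\<forall>m. sum_list (pfx \<omega> (Suc m)) \<noteq> 0"
    show "\<not> ret \<omega>" unfolding ret_def
    proof
      assume "\<exists>j\<ge>1. X \<omega> j = 0"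
      then obtain j where j: "j \<ge> 1" "X \<omega> j = 0" by blast
      then obtain m where "j = Suc m" by (cases j) auto
      then show False using a j X_pfx'[of \<omega> j] by simp
    qed
  qed
  have "{\<omega>. \<not> ret \<omega>} = (\<Inter>m. {\<omega>. sum_list (pfx \<omega> (Suc m)) \<noteq> 0})"
    using eq by auto
  also have "\<dots> \<in> sets (PRW a)" using sets_pfx[of "\<lambda>xs. sum_list xs \<noteq> 0"] by (intro sets.countable_INT') auto
  finally show ?thesis .
qed

lemma steps_preimage: "{\<omega>. steps \<omega> = xs} = {\<omega>. exc xs \<and> pfx \<omega> (length xs) = xs} \<union> ({\<omega>. \<not> ret \<omega>} \<inter> {\<omega>. pfx \<omega> (Inf ({} :: nat set)) = xs})"
proof (intro set_eqI iffI)
  fix \<omega> assume a: "\<omega> \<in> {\<omega>. steps \<omega> = xs}"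
  show "\<omega> \<in> {\<omega>. exc xs \<and> pfx \<omega> (length xs) = xs} \<union> ({\<omega>. \<not> ret \<omega>} \<inter> {\<omega>. pfx \<omega> (Inf ({} :: nat set)) = xs})"
  proof (cases "ret \<omega>")
    case True
    then show ?thesis using ret_L[OF True] a steps_pfx[of \<omega>] by auto
  next
    case False
    then show ?thesis using nret_L[OF False] a steps_pfx[of \<omega>] by auto
  qed
next
  fix \<omega> assume a: "\<omega> \<in> {\<omega>. exc xs \<and> pfx \<omega> (length xs) = xs} \<union> ({\<omega>. \<not> ret \<omega>} \<inter> {\<omega>. pfx \<omega> (Inf ({} :: nat set)) = xs})"
  show "\<omega> \<in> {\<omega>. steps \<omega> = xs}"
  proof (cases "exc xs \<and> pfx \<omega> (length xs) = xs")
    case True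
    then have "exc (pfx \<omega> (length xs))" by simp
    then have "L \<omega> = length xs" using exc_L by blast
    then show ?thesis using True steps_pfx[of \<omega>] by simp
  next
    case False
    then have "\<not> ret \<omega>" "pfx \<omega> (Inf ({} :: nat set)) = xs" using a by auto
    then show ?thesis using nret_L steps_pfx[of \<omega>] by simp
  qed
qed

lemma meas_steps: "steps \<in> measurable (PRW a) (count_space UNIV)"
proof (rule measurable_count_space_eq2_countable[THEN iffD2], safe)
  fix xs :: "int list"
  have "steps -` {xs} \<inter> space (PRW a) = {\<omega>. steps \<omega> = xs}" by auto
  also have "\<dots> \<in> sets (PRW a)" unfolding steps_preimage
    using sets_pfx[of "\<lambda>ys. exc xs \<and> ys = xs" "length xs"] sets_pfx[of "\<lambda>ys. ys = xs" "Inf ({} :: nat set)"]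
    by (intro sets.Un sets.Int sets_nret) auto
  finally show "steps -` {xs} \<inter> space (PRW a) \<in> sets (PRW a)" .
qed auto

lemma W_nonneg: "0 \<le> a \<Longrightarrow> a \<le> 1 \<Longrightarrow> 0 \<le> W a xs"
  by (induction a xs rule: W.induct) auto

lemma W_Cons: "xs \<noteq> [] \<Longrightarrow> W a (x # xs) = (if x = hd xs then a else 1 - a) * W a xs"
  by (cases xs) auto

lemma W_append: "xs \<noteq> [] \<Longrightarrow> ys \<noteq> [] \<Longrightarrow> W a (xs @ ys) = W a xs * (if last xs = hd ys then a else 1 - a) * W a ys"
proof (induction xs)
  case (Cons x xs')
  show ?case
  proof (cases "xs' = []")
    case True
    then show ?thesis using W_Cons[OF Cons(3), of a x] by simp
  next
    case False
    have "W a ((x # xs') @ ys) = (if x = hd xs' then a else 1 - a) * W a (xs' @ ys)"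
      using W_Cons[of "xs' @ ys" a x] False by simp
    also have "\<dots> = (if x = hd xs' then a else 1 - a) * (W a xs' * (if last xs' = hd ys then a else 1 - a) * W a ys)"
      using Cons False by simp
    also have "\<dots> = W a (x # xs') * (if last (x # xs') = hd ys then a else 1 - a) * W a ys"
      using W_Cons[OF False, of a x] False by simp
    finally show ?thesis .
  qed
qed simp

lemma W_rev: "W a (rev xs) = W a xs"
proof (induction xs)
  case (Cons x xs)
  show ?case
  proof (cases "xs = []")
    case True then show ?thesis by simp
  next
    case False
    have "W a (rev (x # xs)) = W a (rev xs @ [x])" by simp
    also have "\<dots> = W a (rev xs) * (if last (rev xs) = x then a else 1 - a) * W a [x]"
      using W_append[of "rev xs" "[x]" a] False by simp
    also have "\<dots> = W a xs * (if hd xs = x then a else 1 - a)" using Cons False by (simp add: last_rev)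
    also have "\<dots> = W a (x # xs)" using W_Cons[OF False] by (auto simp: mult.commute)
    finally show ?thesis .
  qed
qed simp

lemma W_neg: "W a (map uminus xs) = W a xs"
  by (induction a xs rule: W.induct) auto

lemma sumW: assumes "0 \<le> a" "a \<le> 1" shows "(\<Sum>xs\<in>LL (Suc m). W a xs) = 2"
proof -
  interpret P: prob_space "PRW a" by (rule prob_PRW)
  have "measure (PRW a) {\<omega>. (\<lambda>xs. True) (pfx \<omega> (Suc m))} = (\<Sum>xs\<in>LL (Suc m). if True then 1/2 * W a xs else 0)"
    by (rule measure_pfx[OF assms])
  moreover have "{\<omega>. (\<lambda>xs. True) (pfx \<omega> (Suc m))} = space (PRW a)" by simp
  ultimately have "(\<Sum>xs\<in>LL (Suc m). 1/2 * W a xs) = 1" using P.prob_space by simp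
  then show ?thesis by (simp add: sum_divide_distrib[symmetric])
qed

definition Pos :: "nat \<Rightarrow> int list set" where
  "Pos m = {xs \<in> LL m. hd xs = 1 \<and> (\<forall>j. 0 < j \<and> j \<le> m \<longrightarrow> sum_list (take j xs) > 0)}"

definition B :: "real \<Rightarrow> nat \<Rightarrow> real" where
  "B a m = (\<Sum>xs\<in>Pos m. W a xs)"

definition nzp :: "int list \<Rightarrow> bool" where
  "nzp xs \<longleftrightarrow> (\<forall>j. 0 < j \<and> j \<le> length xs \<longrightarrow> sum_list (take j xs) \<noteq> 0)"

lemma finite_Pos: "finite (Pos m)"
  using finite_LL[of m] unfolding Pos_def by simp

lemma nz_pos:
  assumes "set xs \<subseteq> {1,-1}" "hd xs = 1" "nzp xs"
  shows "\<forall>j. 0 < j \<and> j \<le> length xs \<longrightarrow> sum_list (take j xs) > 0"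
proof -
  have "0 < Suc j \<and> Suc j \<le> length xs \<longrightarrow> sum_list (take (Suc j) xs) > 0" for j
  proof (induction j)
    case 0
    then show ?case using assms(2) by (cases xs) auto
  next
    case (Suc j)
    show ?case
    proof
      assume a: "0 < Suc (Suc j) \<and> Suc (Suc j) \<le> length xs"
      have "take (Suc (Suc j)) xs = take (Suc j) xs @ [xs ! Suc j]"
        using a by (simp add: take_Suc_conv_app_nth)
      moreover have "xs ! Suc j \<in> set xs" using a by simp
      then have "xs ! Suc j \<in> {1,-1}" using assms(1) by blast
      moreover have "sum_list (take (Suc (Suc j)) xs) \<noteq> 0" using assms(3) a unfolding nzp_def by blast
      ultimately show "sum_list (take (Suc (Suc j)) xs) > 0" using Suc a by auto
    qed
  qed
  note * = this
  show ?thesis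
  proof (intro allI impI)
    fix j assume a: "0 < j \<and> j \<le> length xs"
    then obtain j' where "j = Suc j'" by (cases j) auto
    then show "sum_list (take j xs) > 0" using *[of j'] a by blast
  qed
qed

lemma sum_nz: assumes "0 \<le> a" "a \<le> 1"
  shows "(\<Sum>xs\<in>LL (Suc m). if nzp xs then 1/2 * W a xs else 0) = B a (Suc m)"
proof -
  define P where "P = Pos (Suc m)"
  have fin: "finite (LL (Suc m))" by (rule finite_LL)
  have eqset: "{xs \<in> LL (Suc m). nzp xs} = P \<union> map uminus ` P"
  proof (intro set_eqI iffI)
    fix xs assume "xs \<in> {xs \<in> LL (Suc m). nzp xs}"
    then have xs: "set xs \<subseteq> {1,-1}" "length xs = Suc m" "nzp xs" unfolding LL_def by auto
    have ne: "xs \<noteq> []" using xs by auto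
    have "hd xs \<in> {1,-1}" using xs ne by (meson hd_in_set subsetD)
    then show "xs \<in> P \<union> map uminus ` P"
    proof
      assume h: "hd xs = 1"
      then show ?thesis using nz_pos[OF xs(1) h xs(3)] xs unfolding P_def Pos_def LL_def by auto
    next
      assume "hd xs \<in> {-1}"
      then have h: "hd (map uminus xs) = 1" using ne by (simp add: hd_map)
      have s: "set (map uminus xs) \<subseteq> {1,-1}" using xs by auto
      have n: "nzp (map uminus xs)" using xs(3) unfolding nzp_def by (simp add: take_map sum_list_uminus)
      have "map uminus xs \<in> P" using nz_pos[OF s h n] s xs h unfolding P_def Pos_def LL_def by auto
      moreover have "xs = map uminus (map uminus xs)" by simp
      ultimately show ?thesis by blast
    qed
  next
    fix xs assume "xs \<in> P \<union> map uminus ` P"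
    then obtain ys where ys: "ys \<in> P" "xs = ys \<or> xs = map uminus ys" by blast
    then have y: "set ys \<subseteq> {1,-1}" "length ys = Suc m" "\<forall>j. 0 < j \<and> j \<le> Suc m \<longrightarrow> 0 < sum_list (take j ys)"
      unfolding P_def Pos_def LL_def by auto
    have "set (map uminus ys) \<subseteq> {1,-1}" using y(1) by auto
    moreover have "nzp ys" using y unfolding nzp_def by (metis less_irrefl)
    moreover have "nzp (map uminus ys)" using y unfolding nzp_def by (auto simp: take_map sum_list_uminus)
    moreover have "ys \<in> LL (Suc m)" using ys(1) unfolding P_def Pos_def by auto
    moreover have "map uminus ys \<in> LL (Suc m)" using \<open>set (map uminus ys) \<subseteq> {1,-1}\<close> y(2) unfolding LL_def by simp
    ultimately show "xs \<in> {xs \<in> LL (Suc m). nzp xs}" using ys(2) by blast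
  qed
  have disj: "P \<inter> map uminus ` P = {}"
  proof -
    have "hd xs = 1" if "xs \<in> P" for xs using that unfolding P_def Pos_def by auto
    moreover have "xs \<noteq> []" if "xs \<in> P" for xs using that unfolding P_def Pos_def LL_def by auto
    ultimately have "xs \<notin> map uminus ` P" if "xs \<in> P" for xs
    proof -
      assume h: "\<And>xs. xs \<in> P \<Longrightarrow> hd xs = 1" and n: "\<And>xs. xs \<in> P \<Longrightarrow> xs \<noteq> []"
      show "xs \<notin> map uminus ` P"
      proof
        assume "xs \<in> map uminus ` P"
        then obtain ys where "ys \<in> P" "xs = map uminus ys" by blast
        then have "hd xs = -1" using h n by (simp add: hd_map)
        then show False using h[OF that] by simp
      qed
    qed
    then show ?thesis by blast
  qed
  have finP: "finite P" unfolding P_def by (rule finite_Pos)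
  have inj: "inj_on (map uminus) P" by (rule inj_onI) simp
  have "(\<Sum>xs\<in>LL (Suc m). if nzp xs then 1/2 * W a xs else 0) = (\<Sum>xs\<in>{xs \<in> LL (Suc m). nzp xs}. 1/2 * W a xs)"
    by (rule sum.inter_filter[symmetric, OF fin])
  also have "\<dots> = (\<Sum>xs\<in>P. 1/2 * W a xs) + (\<Sum>xs\<in>map uminus ` P. 1/2 * W a xs)"
    unfolding eqset using finP disj by (intro sum.union_disjoint) auto
  also have "(\<Sum>xs\<in>map uminus ` P. 1/2 * W a xs) = (\<Sum>xs\<in>P. 1/2 * W a (map uminus xs))"
    using inj by (simp add: sum.reindex)
  also have "\<dots> = (\<Sum>xs\<in>P. 1/2 * W a xs)" by (simp add: W_neg)
  finally show ?thesis unfolding B_def P_def by (simp add: sum_divide_distrib[symmetric])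
qed

lemma nret_le_B: assumes "0 \<le> a" "a \<le> 1"
  shows "measure (PRW a) {\<omega>. \<not> ret \<omega>} \<le> B a (Suc m)"
proof -
  interpret P: prob_space "PRW a" by (rule prob_PRW)
  have "{\<omega>. \<not> ret \<omega>} \<subseteq> {\<omega>. nzp (pfx \<omega> (Suc m))}"
  proof
    fix \<omega> assume "\<omega> \<in> {\<omega>. \<not> ret \<omega>}"
    then have nz: "\<forall>j\<ge>1. X \<omega> j \<noteq> 0" unfolding ret_def by auto
    have "nzp (pfx \<omega> (Suc m))" unfolding nzp_def
    proof (intro allI impI)
      fix j assume j: "0 < j \<and> j \<le> length (pfx \<omega> (Suc m))"
      then have "X \<omega> j = sum_list (take j (pfx \<omega> (Suc m)))" using X_pfx[of j "Suc m" \<omega>] by simp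
      moreover have "X \<omega> j \<noteq> 0" using nz j by simp
      ultimately show "sum_list (take j (pfx \<omega> (Suc m))) \<noteq> 0" by simp
    qed
    then show "\<omega> \<in> {\<omega>. nzp (pfx \<omega> (Suc m))}" by simp
  qed
  then have "measure (PRW a) {\<omega>. \<not> ret \<omega>} \<le> measure (PRW a) {\<omega>. nzp (pfx \<omega> (Suc m))}"
    using sets_pfx[of nzp "Suc m" a] by (intro P.finite_measure_mono) auto
  also have "\<dots> = B a (Suc m)" using measure_pfx[OF assms, of nzp m] sum_nz[OF assms, of m] by simp
  finally show ?thesis .
qed

definition J :: "int list \<times> int list \<Rightarrow> int list" where
  "J z = rev (map uminus (fst z)) @ snd z"

lemma Pos_props: "p \<in> Pos k \<Longrightarrow> set p \<subseteq> {1,-1} \<and> length p = k \<and> hd p = 1 \<and> (\<forall>j. 0 < j \<and> j \<le> k \<longrightarrow> sum_list (take j p) > 0)"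
  unfolding Pos_def LL_def by auto

lemma J_h1: assumes "p \<in> Pos k" "i < k"
  shows "sum_list (take i (J (p, f))) > sum_list (take k (J (p, f)))"
proof -
  have p: "length p = k" "\<forall>j. 0 < j \<and> j \<le> k \<longrightarrow> sum_list (take j p) > 0" using Pos_props[OF assms(1)] by auto
  define q where "q = rev (map uminus p)"
  have lq: "length q = k" unfolding q_def using p by simp
  have Jq: "J (p, f) = q @ f" unfolding J_def q_def by simp
  have t1: "take i (J (p, f)) = take i q" unfolding Jq using lq assms(2) by simp
  have t2: "take k (J (p, f)) = q" unfolding Jq using lq by simp
  have "take i q = rev (drop (k - i) (map uminus p))" unfolding q_def using p by (simp add: take_rev)
  then have s1: "sum_list (take i q) = - sum_list (drop (k - i) p)" by (simp add: drop_map sum_list_uminus)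
  have s2: "sum_list q = - sum_list p" unfolding q_def by (simp add: sum_list_uminus)
  have sp: "sum_list p = sum_list (take (k - i) p) + sum_list (drop (k - i) p)"
    by (metis append_take_drop_id sum_list_append)
  have "sum_list (take (k - i) p) > 0" using p assms(2) by simp
  then show ?thesis unfolding t1 t2 s1 s2 using sp by simp
qed

lemma J_h2: assumes "p \<in> Pos k" "f \<in> Pos m" "k < i" "i \<le> k + m"
  shows "sum_list (take i (J (p, f))) > sum_list (take k (J (p, f)))"
proof -
  have p: "length p = k" using Pos_props[OF assms(1)] by auto
  have f: "\<forall>j. 0 < j \<and> j \<le> m \<longrightarrow> sum_list (take j f) > 0" using Pos_props[OF assms(2)] by auto
  define q where "q = rev (map uminus p)"
  have lq: "length q = k" unfolding q_def using p by simp
  have Jq: "J (p, f) = q @ f" unfolding J_def q_def by simp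
  have t1: "take i (J (p, f)) = q @ take (i - k) f" unfolding Jq using lq assms(3) by simp
  have t2: "take k (J (p, f)) = q" unfolding Jq using lq by simp
  have "sum_list (take (i - k) f) > 0" using f assms(3,4) by simp
  then show ?thesis unfolding t1 t2 by simp
qed

lemma J_LL: "p \<in> Pos k \<Longrightarrow> f \<in> Pos m \<Longrightarrow> J (p, f) \<in> LL (k + m)"
  using Pos_props[of p k] Pos_props[of f m] unfolding J_def LL_def by auto

lemma J_W: assumes "p \<in> Pos k" "f \<in> Pos m" "k \<ge> 1" "m \<ge> 1"
  shows "W a (J (p, f)) = W a p * (1 - a) * W a f"
proof -
  have p: "length p = k" "hd p = 1" and f: "length f = m" "hd f = 1" using Pos_props[OF assms(1)] Pos_props[OF assms(2)] by auto
  have pne: "p \<noteq> []" using p assms(3) by auto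
  have fne: "f \<noteq> []" using f assms(4) by auto
  have qne: "rev (map uminus p) \<noteq> []" using pne by simp
  have "last (rev (map uminus p)) = - hd p" using pne by (simp add: last_rev hd_map)
  then have lst: "last (rev (map uminus p)) \<noteq> hd f" using p f by simp
  have "W a (J (p, f)) = W a (rev (map uminus p)) * (if last (rev (map uminus p)) = hd f then a else 1 - a) * W a f"
    unfolding J_def using W_append[OF qne fne] by simp
  also have "\<dots> = W a p * (1 - a) * W a f" using lst by (simp add: W_rev W_neg)
  finally show ?thesis .
qed

lemma J_inj: "inj_on J (Pos k \<times> Pos m)"
proof (rule inj_onI)
  fix z z' assume z: "z \<in> Pos k \<times> Pos m" and z': "z' \<in> Pos k \<times> Pos m" and e: "J z = J z'"
  have l: "length (rev (map uminus (fst z))) = length (rev (map uminus (fst z')))"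
    using z z' Pos_props by auto
  have "rev (map uminus (fst z)) = rev (map uminus (fst z')) \<and> snd z = snd z'"
    using e unfolding J_def using append_eq_append_conv[OF disjI1[OF l]] by blast
  then have "fst z = fst z'" "snd z = snd z'" by (auto dest: map_inj_on simp: inj_on_def)
  then show "z = z'" by (simp add: prod_eq_iff)
qed

definition D :: "nat \<Rightarrow> nat \<Rightarrow> int list set" where
  "D N k = J ` (Pos k \<times> Pos (N - k))"

lemma D_disj: assumes "1 \<le> k" "k < k'" "k' < N" shows "D N k \<inter> D N k' = {}"
proof (rule ccontr)
  assume "D N k \<inter> D N k' \<noteq> {}"
  then obtain xs where x1: "xs \<in> D N k" and x2: "xs \<in> D N k'" by blast
  obtain p f where pf: "p \<in> Pos k" "f \<in> Pos (N - k)" "xs = J (p, f)" using x1 unfolding D_def by auto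
  obtain p' f' where pf': "p' \<in> Pos k'" "f' \<in> Pos (N - k')" "xs = J (p', f')" using x2 unfolding D_def by auto
  have "sum_list (take k xs) > sum_list (take k' xs)" using J_h1[OF pf'(1) assms(2), of f'] pf'(3) by simp
  moreover have "sum_list (take k' xs) > sum_list (take k xs)" using J_h2[OF pf(1) pf(2) assms(2)] pf(3) assms by simp
  ultimately show False by simp
qed

lemma sum_D: assumes "1 \<le> k" "k < N" shows "(\<Sum>xs\<in>D N k. W a xs) = (1 - a) * (B a k * B a (N - k))"
proof -
  have "(\<Sum>xs\<in>D N k. W a xs) = (\<Sum>z\<in>Pos k \<times> Pos (N - k). W a (J z))"
    unfolding D_def by (rule sum.reindex[OF J_inj, unfolded comp_def])
  also have "\<dots> = (\<Sum>z\<in>Pos k \<times> Pos (N - k). W a (fst z) * (1 - a) * W a (snd z))"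
    using assms by (intro sum.cong refl) (auto intro!: J_W)
  also have "\<dots> = (\<Sum>p\<in>Pos k. \<Sum>f\<in>Pos (N - k). W a p * (1 - a) * W a f)"
    by (simp add: sum.cartesian_product split_def)
  also have "\<dots> = (\<Sum>p\<in>Pos k. \<Sum>f\<in>Pos (N - k). (1 - a) * (W a p * W a f))"
    by (simp add: algebra_simps)
  also have "\<dots> = (1 - a) * (\<Sum>p\<in>Pos k. \<Sum>f\<in>Pos (N - k). W a p * W a f)"
    by (simp add: sum_distrib_left)
  also have "\<dots> = (1 - a) * (B a k * B a (N - k))"
    unfolding B_def sum_product ..
  finally show ?thesis .
qed

lemma decomp_ineq: assumes "0 \<le> a" "a \<le> 1"
  shows "(1 - a) * (\<Sum>k\<in>{1..<Suc M}. B a k * B a (Suc M - k)) \<le> 2"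
proof -
  define N where "N = Suc M"
  have fin: "finite (D N k)" for k unfolding D_def using finite_Pos by auto
  have "(1 - a) * (\<Sum>k\<in>{1..<N}. B a k * B a (N - k)) = (\<Sum>k\<in>{1..<N}. \<Sum>xs\<in>D N k. W a xs)"
    by (simp add: sum_D sum_distrib_left)
  also have "\<dots> = (\<Sum>xs\<in>(\<Union>k\<in>{1..<N}. D N k). W a xs)"
  proof (rule sum.UNION_disjoint[symmetric])
    show "\<forall>i\<in>{1..<N}. \<forall>j\<in>{1..<N}. i \<noteq> j \<longrightarrow> D N i \<inter> D N j = {}"
    proof (intro ballI impI)
      fix i j assume i: "i \<in> {1..<N}" and j: "j \<in> {1..<N}" and ij: "i \<noteq> j"
      show "D N i \<inter> D N j = {}"
      proof (cases "i < j")
        case True then show ?thesis using D_disj[of i j N] i j by auto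
      next
        case False then have "j < i" using ij by simp
        then show ?thesis using D_disj[of j i N] i j by auto
      qed
    qed
  qed (auto intro: fin)
  also have "\<dots> \<le> (\<Sum>xs\<in>LL N. W a xs)"
  proof (rule sum_mono2[OF finite_LL])
    show "(\<Union>k\<in>{1..<N}. D N k) \<subseteq> LL N"
    proof
      fix xs assume "xs \<in> (\<Union>k\<in>{1..<N}. D N k)"
      then obtain k p f where "k \<in> {1..<N}" "p \<in> Pos k" "f \<in> Pos (N - k)" "xs = J (p, f)" unfolding D_def by auto
      then show "xs \<in> LL N" using J_LL[of p k f "N - k"] by simp
    qed
    show "\<And>b. b \<in> LL N - (\<Union>k\<in>{1..<N}. D N k) \<Longrightarrow> 0 \<le> W a b" using W_nonneg[OF assms] by blast
  qed
  also have "\<dots> = 2" unfolding N_def by (rule sumW[OF assms])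
  finally show ?thesis unfolding N_def .
qed

lemma B_nonneg: "0 \<le> a \<Longrightarrow> a \<le> 1 \<Longrightarrow> 0 \<le> B a m"
  unfolding B_def by (intro sum_nonneg W_nonneg)

lemma nret_null: assumes "0 < a" "a < 1"
  shows "measure (PRW a) {\<omega>. \<not> ret \<omega>} = 0"
proof (rule ccontr)
  define p0 where "p0 = measure (PRW a) {\<omega>. \<not> ret \<omega>}"
  assume "measure (PRW a) {\<omega>. \<not> ret \<omega>} \<noteq> 0"
  then have pp: "p0 > 0" unfolding p0_def using measure_nonneg[of "PRW a"] by (simp add: order_less_le)
  have le: "p0 \<le> B a k" if k1: "k \<ge> 1" for k
  proof -
    obtain m where "k = Suc m" using k1 by (cases k) auto
    then show ?thesis unfolding p0_def using nret_le_B[of a m] assms by simp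
  qed
  define M where "M = nat \<lceil>2 / ((1 - a) * p0 * p0)\<rceil> + 1"
  have "(\<Sum>k\<in>{1..<Suc M}. p0 * p0) \<le> (\<Sum>k\<in>{1..<Suc M}. B a k * B a (Suc M - k))"
    using pp le B_nonneg[of a] assms by (intro sum_mono mult_mono) auto
  then have "real M * (p0 * p0) \<le> (\<Sum>k\<in>{1..<Suc M}. B a k * B a (Suc M - k))" by simp
  then have "(1 - a) * (real M * (p0 * p0)) \<le> 2"
    using decomp_ineq[of a M] assms by (smt (verit) mult_left_mono)
  moreover have "real M > 2 / ((1 - a) * p0 * p0)" unfolding M_def by linarith
  then have "real M * ((1 - a) * p0 * p0) > 2" using pp assms by (simp add: field_simps)
  ultimately show False by (simp add: algebra_simps)
qed

lemma L_steps: "L \<omega> = length (steps \<omega>)"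
  by (simp add: steps_pfx)

lemma sets_steps_ev: "{\<omega> \<in> space (PRW a). G (steps \<omega>)} \<in> sets (PRW a)"
proof -
  have "steps -` {xs. G xs} \<inter> space (PRW a) \<in> sets (PRW a)"
    by (rule measurable_sets[OF meas_steps]) simp
  then show ?thesis by (simp add: vimage_def)
qed

lemma measure_steps_event:
  assumes a: "0 < a" "a < 1" and G: "\<And>xs. G xs \<Longrightarrow> length xs = Suc m"
  shows "measure (PRW a) {\<omega> \<in> space (PRW a). G (steps \<omega>)} = (\<Sum>xs\<in>LL (Suc m). if exc xs \<and> G xs then 1/2 * W a xs else 0)"
proof -
  interpret P: prob_space "PRW a" by (rule prob_PRW)
  define E where "E = {\<omega> \<in> space (PRW a). G (steps \<omega>)}"
  define A where "A = {\<omega>. (\<lambda>xs. exc xs \<and> G xs) (pfx \<omega> (Suc m))}"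
  define NR where "NR = {\<omega>. \<not> ret \<omega>}"
  have AE: "A \<subseteq> E"
  proof
    fix \<omega> assume "\<omega> \<in> A"
    then have e: "exc (pfx \<omega> (Suc m))" "G (pfx \<omega> (Suc m))" unfolding A_def by auto
    then have "L \<omega> = Suc m" using exc_L by blast
    then show "\<omega> \<in> E" unfolding E_def using e steps_pfx[of \<omega>] by simp
  qed
  have EA: "E = A \<union> (E \<inter> NR)"
  proof (intro set_eqI iffI)
    fix \<omega> assume w: "\<omega> \<in> E"
    show "\<omega> \<in> A \<union> (E \<inter> NR)"
    proof (cases "ret \<omega>")
      case True
      then have r: "exc (pfx \<omega> (L \<omega>))" using ret_L by blast
      have "G (pfx \<omega> (L \<omega>))" using w steps_pfx[of \<omega>] unfolding E_def by simp
      then have "L \<omega> = Suc m" using G[of "pfx \<omega> (L \<omega>)"] by simp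
      then have "\<omega> \<in> A" using r \<open>G (pfx \<omega> (L \<omega>))\<close> unfolding A_def by simp
      then show ?thesis by simp
    next
      case False
      then show ?thesis using w unfolding NR_def by simp
    qed
  qed (use AE in auto)
  have sA: "A \<in> sets (PRW a)" unfolding A_def by (rule sets_pfx)
  have sE: "E \<in> sets (PRW a)" unfolding E_def by (rule sets_steps_ev)
  have sNR: "NR \<in> sets (PRW a)" unfolding NR_def by (rule sets_nret)
  have "measure (PRW a) NR = 0" unfolding NR_def by (rule nret_null[OF a])
  then have "measure (PRW a) (E \<inter> NR) = 0"
    using P.finite_measure_mono[of "E \<inter> NR" NR] sNR measure_nonneg[of "PRW a" "E \<inter> NR"] by auto
  then have null: "E \<inter> NR \<in> null_sets (PRW a)"
    using sE sNR by (simp add: null_sets_def P.emeasure_eq_measure)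
  have "measure (PRW a) E = measure (PRW a) A"
    by (subst EA) (rule measure_Un_null_set[OF sA null])
  also have "\<dots> = (\<Sum>xs\<in>LL (Suc m). if exc xs \<and> G xs then 1/2 * W a xs else 0)"
    unfolding A_def using measure_pfx[of a "\<lambda>xs. exc xs \<and> G xs" m] a by simp
  finally show ?thesis unfolding E_def .
qed

lemma num_runs_pos: "xs \<noteq> [] \<Longrightarrow> num_runs xs \<ge> 1"
  using runlens_ne[of xs] unfolding num_runs_def by (cases "runlens xs") auto

lemma num_runs_CC: "num_runs (x # y # zs) = num_runs (y # zs) + (if x = y then 0 else 1)"
  unfolding num_runs_def using runlens_ne[of "y # zs"] by (cases "runlens (y # zs)") (auto simp: runlens_CC)

lemma W_runs: "xs \<noteq> [] \<Longrightarrow> W a xs = a ^ (length xs - num_runs xs) * (1 - a) ^ (num_runs xs - 1)"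
proof (induction a xs rule: W.induct)
  case (1 a x y zs)
  have r1: "num_runs (y # zs) \<ge> 1" by (rule num_runs_pos) simp
  have r2: "num_runs (y # zs) \<le> length (y # zs)" by (rule num_runs_le)
  have IH: "W a (y # zs) = a ^ (length (y # zs) - num_runs (y # zs)) * (1 - a) ^ (num_runs (y # zs) - 1)"
    using 1 by simp
  show ?case
  proof (cases "x = y")
    case True
    have "length (x # y # zs) - num_runs (x # y # zs) = Suc (length (y # zs) - num_runs (y # zs))"
      using True r2 num_runs_CC[of x y zs] by simp
    moreover have "num_runs (x # y # zs) = num_runs (y # zs)" using True num_runs_CC[of x y zs] by simp
    ultimately show ?thesis using True IH by simp
  next
    case False
    have "length (x # y # zs) - num_runs (x # y # zs) = length (y # zs) - num_runs (y # zs)"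
      using False r2 num_runs_CC[of x y zs] by simp
    moreover have "num_runs (x # y # zs) - 1 = Suc (num_runs (y # zs) - 1)" using False r1 num_runs_CC[of x y zs] by simp
    ultimately have "a ^ (length (x # y # zs) - num_runs (x # y # zs)) * (1 - a) ^ (num_runs (x # y # zs) - 1)
       = (1 - a) * (a ^ (length (y # zs) - num_runs (y # zs)) * (1 - a) ^ (num_runs (y # zs) - 1))"
      by (simp only: power_Suc) (simp add: mult.commute mult.left_commute)
    moreover have "W a (x # y # zs) = (1 - a) * W a (y # zs)" using False by simp
    ultimately show ?thesis using IH by simp
  qed
qed (auto simp: num_runs_def)

lemma SS_LL: "SS N r l = {xs \<in> LL N. exc xs \<and> num_runs xs = r \<and> num_long_runs xs = l}"
  unfolding SS_def LL_def by auto

lemma measure_SS: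
  assumes a: "0 < a" "a < 1" and N: "N \<ge> 1" and G: "\<And>xs. xs \<in> LL N \<Longrightarrow> exc xs \<Longrightarrow> G xs \<longleftrightarrow> length xs = N \<and> num_runs xs = r \<and> num_long_runs xs = l"
    and GL: "\<And>xs. G xs \<Longrightarrow> length xs = N"
  shows "measure (PRW a) {\<omega> \<in> space (PRW a). G (steps \<omega>)} = real (card (SS N r l)) * (1/2 * a ^ (N - r) * (1 - a) ^ (r - 1))"
proof -
  obtain m where m: "N = Suc m" using N by (cases N) auto
  have "measure (PRW a) {\<omega> \<in> space (PRW a). G (steps \<omega>)} = (\<Sum>xs\<in>LL N. if exc xs \<and> G xs then 1/2 * W a xs else 0)"
    unfolding m by (rule measure_steps_event[OF a]) (use GL m in auto)
  also have "\<dots> = (\<Sum>xs\<in>LL N. if xs \<in> SS N r l then 1/2 * W a xs else 0)"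
  proof (intro sum.cong refl)
    fix xs assume xs: "xs \<in> LL N"
    have "length xs = N" using xs by (simp add: LL_def)
    then show "(if exc xs \<and> G xs then 1/2 * W a xs else 0) = (if xs \<in> SS N r l then 1/2 * W a xs else 0)"
      using G[OF xs] xs by (auto simp: SS_LL)
  qed
  also have "\<dots> = (\<Sum>xs\<in>SS N r l. 1/2 * W a xs)"
    using finite_LL[of N] by (simp add: sum.inter_filter[symmetric] SS_LL)
  also have "\<dots> = (\<Sum>xs\<in>SS N r l. 1/2 * a ^ (N - r) * (1 - a) ^ (r - 1))"
  proof (intro sum.cong refl)
    fix xs assume "xs \<in> SS N r l"
    then have "xs \<noteq> []" "length xs = N" "num_runs xs = r" unfolding SS_def exc_def by auto
    then show "1/2 * W a xs = 1/2 * a ^ (N - r) * (1 - a) ^ (r - 1)" using W_runs[of xs a] by simp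
  qed
  finally show ?thesis by simp
qed

lemma part1:
  assumes a: "0 < a" "a < 1" and n: "n \<ge> 2"
  shows "(1 - a) * measure (PRW a) {\<omega> \<in> space (PRW a). L \<omega> = 2*n \<and> R \<omega> = 2*k \<and> U \<omega> = l}
       = a * measure (PRW (1 - a)) {\<omega> \<in> space (PRW (1 - a)). L \<omega> = 2*n \<and> L \<omega> - R \<omega> = 2*k \<and> U \<omega> = l}"
proof -
  define N where "N = 2 * n"
  have N1: "N \<ge> 1" and N4: "N \<ge> 4" unfolding N_def using n by auto
  have m1: "measure (PRW a) {\<omega> \<in> space (PRW a). L \<omega> = 2*n \<and> R \<omega> = 2*k \<and> U \<omega> = l}
    = real (card (SS N (2*k) l)) * (1/2 * a ^ (N - 2*k) * (1 - a) ^ (2*k - 1))"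
  proof -
    have "{\<omega> \<in> space (PRW a). L \<omega> = 2*n \<and> R \<omega> = 2*k \<and> U \<omega> = l}
      = {\<omega> \<in> space (PRW a). (\<lambda>xs. length xs = N \<and> num_runs xs = 2*k \<and> num_long_runs xs = l) (steps \<omega>)}"
      unfolding N_def L_steps R_def U_def by simp
    also have "measure (PRW a) \<dots> = real (card (SS N (2*k) l)) * (1/2 * a ^ (N - 2*k) * (1 - a) ^ (2*k - 1))"
      by (rule measure_SS[OF a N1]) auto
    finally show ?thesis .
  qed
  have a': "0 < 1 - a" "1 - a < 1" using a by auto
  have m2: "measure (PRW (1 - a)) {\<omega> \<in> space (PRW (1 - a)). L \<omega> = 2*n \<and> L \<omega> - R \<omega> = 2*k \<and> U \<omega> = l}
    = real (card (SS N (N - 2*k) l)) * (1/2 * (1 - a) ^ (N - (N - 2*k)) * (1 - (1 - a)) ^ ((N - 2*k) - 1))"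
  proof -
    have "{\<omega> \<in> space (PRW (1 - a)). L \<omega> = 2*n \<and> L \<omega> - R \<omega> = 2*k \<and> U \<omega> = l}
      = {\<omega> \<in> space (PRW (1 - a)). (\<lambda>xs. length xs = N \<and> length xs - num_runs xs = 2*k \<and> num_long_runs xs = l) (steps \<omega>)}"
      unfolding N_def L_steps R_def U_def by simp
    also have "measure (PRW (1 - a)) \<dots> = real (card (SS N (N - 2*k) l)) * (1/2 * (1 - a) ^ (N - (N - 2*k)) * (1 - (1 - a)) ^ ((N - 2*k) - 1))"
    proof (rule measure_SS[OF a' N1])
      fix xs assume xs: "xs \<in> LL N" "exc xs"
      then have "num_runs xs \<ge> 1" "num_runs xs \<le> length xs" "length xs = N"
        using num_runs_pos[of xs] num_runs_le[of xs] unfolding exc_def LL_def by auto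
      then show "(length xs = N \<and> length xs - num_runs xs = 2 * k \<and> num_long_runs xs = l) \<longleftrightarrow>
          (length xs = N \<and> num_runs xs = N - 2 * k \<and> num_long_runs xs = l)" by auto
    qed auto
    finally show ?thesis .
  qed
  have cc: "card (SS N (2*k) l) = card (SS N (N - 2*k) l)" by (rule card_SS[OF N4])
  show ?thesis
  proof (cases "card (SS N (2*k) l) = 0")
    case True
    then show ?thesis using m1 m2 cc by simp
  next
    case False
    then obtain xs where "xs \<in> SS N (2*k) l" by (metis card.empty ex_in_conv)
    then have k1: "k \<ge> 1" using num_runs_pos[of xs] unfolding SS_def exc_def by auto
    obtain ys where "ys \<in> SS N (N - 2*k) l" using False cc by (metis card.empty ex_in_conv)
    then have k2: "2 * k < N" using num_runs_pos[of ys] unfolding SS_def exc_def by auto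
    have e1: "N - (N - 2*k) = 2*k" using k2 by simp
    obtain i where i: "2*k = Suc i" using k1 by (cases "2*k") auto
    have e2: "(1 - a) * (1 - a) ^ (2*k - 1) = (1 - a) ^ (2*k)" unfolding i by simp
    obtain j where j: "N - 2*k = Suc j" using k2 by (cases "N - 2*k") auto
    have e3: "a * a ^ (N - 2*k - 1) = a ^ (N - 2*k)" unfolding j by simp
    have "(1 - a) * (real (card (SS N (2*k) l)) * (1/2 * a ^ (N - 2*k) * (1 - a) ^ (2*k - 1)))
        = real (card (SS N (2*k) l)) * (1/2 * a ^ (N - 2*k) * ((1 - a) * (1 - a) ^ (2*k - 1)))" by (simp only: mult_ac)
    also have "\<dots> = real (card (SS N (2*k) l)) * (1/2 * (1 - a) ^ (2*k) * (a * a ^ (N - 2*k - 1)))"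
      unfolding e2 e3 by (simp only: mult_ac)
    also have "\<dots> = a * (real (card (SS N (N - 2*k) l)) * (1/2 * (1 - a) ^ (N - (N - 2*k)) * (1 - (1 - a)) ^ ((N - 2*k) - 1)))"
      unfolding e1 cc by (simp add: mult_ac)
    finally have calc: "(1 - a) * (real (card (SS N (2*k) l)) * (1/2 * a ^ (N - 2*k) * (1 - a) ^ (2*k - 1)))
      = a * (real (card (SS N (N - 2*k) l)) * (1/2 * (1 - a) ^ (N - (N - 2*k)) * (1 - (1 - a)) ^ ((N - 2*k) - 1)))" .
    show ?thesis unfolding m1 m2 by (rule calc)
  qed
qed

definition G1 :: "real \<Rightarrow> real \<Rightarrow> real \<Rightarrow> int list \<Rightarrow> complex" where
  "G1 r s t xs = exp (\<i> * of_real (r * real (num_runs xs))) * exp (\<i> * of_real (s * real (num_long_runs xs)))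
                   * exp (\<i> * of_real (t * real (length xs)))"

definition G2 :: "real \<Rightarrow> real \<Rightarrow> real \<Rightarrow> int list \<Rightarrow> complex" where
  "G2 r s t xs = exp (\<i> * of_real (r * real (length xs - num_runs xs))) * exp (\<i> * of_real (s * real (num_long_runs xs)))
                   * exp (\<i> * of_real (t * real (length xs)))"

definition FF :: "real \<Rightarrow> real \<Rightarrow> real \<Rightarrow> int list \<Rightarrow> complex" where
  "FF r s t xs = G1 r s t xs - G2 r s t xs"

definition HH :: "real \<Rightarrow> real \<Rightarrow> real \<Rightarrow> int list \<Rightarrow> complex" where
  "HH r s t xs = (if exc xs then FF r s t xs else 0)"

lemma norm_G1: "norm (G1 r s t xs) = 1"
  unfolding G1_def by (simp add: norm_mult norm_exp_i_times)
lemma norm_G2: "norm (G2 r s t xs) = 1"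
  unfolding G2_def by (simp add: norm_mult norm_exp_i_times)
lemma norm_FF: "norm (FF r s t xs) \<le> 2"
  unfolding FF_def using norm_triangle_ineq4[of "G1 r s t xs" "G2 r s t xs"] norm_G1 norm_G2 by simp
lemma norm_HH: "norm (HH r s t xs) \<le> 2"
  unfolding HH_def using norm_FF by simp

lemma meas_count: "(H :: int list \<Rightarrow> 'b::topological_space) \<in> borel_measurable (count_space UNIV)"
  by simp

lemma integrable_steps: "integrable (PRW a) (\<lambda>\<omega>. G r s t (steps \<omega>))" if "\<And>xs. norm (G r s t xs) \<le> 2"
  for G :: "real \<Rightarrow> real \<Rightarrow> real \<Rightarrow> int list \<Rightarrow> complex"
proof -
  interpret P: prob_space "PRW a" by (rule prob_PRW)
  show ?thesis
  proof (rule P.integrable_const_bound[where B=2])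
    show "AE x in PRW a. norm (G r s t (steps x)) \<le> 2" using that by simp
    show "(\<lambda>\<omega>. G r s t (steps \<omega>)) \<in> borel_measurable (PRW a)"
      by (rule measurable_compose[OF meas_steps meas_count])
  qed
qed

lemma integrable_pfxH: "integrable (PRW a) (\<lambda>\<omega>. H (pfx \<omega> n))" if "\<And>xs. norm (H xs) \<le> (c::real)"
  for H :: "int list \<Rightarrow> complex"
proof -
  interpret P: prob_space "PRW a" by (rule prob_PRW)
  show ?thesis
  proof (rule P.integrable_const_bound[where B=c])
    show "AE x in PRW a. norm (H (pfx x n)) \<le> c" using that by simp
    show "(\<lambda>\<omega>. H (pfx \<omega> n)) \<in> borel_measurable (PRW a)"
      by (rule measurable_compose[OF meas_pfx meas_count])
  qed
qed

lemma W_half: "W (1/2) xs = (1/2) ^ (length xs - 1)"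
  by (induction "1/2 :: real" xs rule: W.induct) auto

definition EXC :: "nat \<Rightarrow> int list set" where
  "EXC N = {xs \<in> LL N. exc xs}"

lemma bij_Psi: assumes "N \<ge> 4" shows "bij_betw Psi (EXC N) (EXC N)"
proof (rule bij_betw_byWitness[where f' = Psi])
  show "\<forall>a\<in>EXC N. Psi (Psi a) = a" using Psi_props assms unfolding EXC_def LL_def by auto
  show "\<forall>a\<in>EXC N. Psi (Psi a) = a" using Psi_props assms unfolding EXC_def LL_def by auto
  show "Psi ` EXC N \<subseteq> EXC N" using Psi_props assms unfolding EXC_def LL_def by auto
  show "Psi ` EXC N \<subseteq> EXC N" using Psi_props assms unfolding EXC_def LL_def by auto
qed

lemma G2_Psi: assumes "N \<ge> 4" "xs \<in> EXC N" shows "G1 r s t (Psi xs) = G2 r s t xs"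
  using Psi_props[of xs] assms unfolding EXC_def LL_def G1_def G2_def by auto

lemma sum_HH_zero: assumes "N \<ge> 4" shows "(\<Sum>xs\<in>LL N. HH r s t xs) = 0"
proof -
  have fin: "finite (LL N)" by (rule finite_LL)
  have "(\<Sum>xs\<in>LL N. HH r s t xs) = (\<Sum>xs\<in>EXC N. FF r s t xs)"
    unfolding HH_def EXC_def using fin by (simp add: sum.inter_filter)
  also have "\<dots> = (\<Sum>xs\<in>EXC N. G1 r s t xs) - (\<Sum>xs\<in>EXC N. G2 r s t xs)"
    unfolding FF_def by (simp add: sum_subtractf)
  also have "(\<Sum>xs\<in>EXC N. G2 r s t xs) = (\<Sum>xs\<in>EXC N. G1 r s t (Psi xs))"
    using G2_Psi[OF assms] by simp
  also have "\<dots> = (\<Sum>xs\<in>EXC N. G1 r s t xs)"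
    by (rule sum.reindex_bij_betw[OF bij_Psi[OF assms]])
  finally show ?thesis by simp
qed

lemma LL2: "LL 2 = {[1,1],[1,-1],[-1,1],[-1,-1]}"
proof (intro set_eqI iffI)
  fix xs assume "xs \<in> LL 2"
  then have "set xs \<subseteq> {1,-1}" "length xs = 2" unfolding LL_def by auto
  then obtain x y where "xs = [x,y]" "x \<in> {1,-1}" "y \<in> {1,-1}"
    by (cases xs; cases "tl xs"; auto)
  then show "xs \<in> {[1,1],[1,-1],[-1,1],[-1,-1]}" by auto
qed (auto simp: LL_def)

lemma integral_h:
  "integral\<^sup>L (PRW (1/2)) (\<lambda>\<omega>. HH r s t (pfx \<omega> n)) = (if n = 2 then (1/2) * exp (2 * \<i> * of_real t) * (exp (2 * \<i> * of_real r) - 1) else 0)"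
proof (cases n)
  case 0
  then show ?thesis by (simp add: pfx_0 HH_def exc_def)
next
  case (Suc m)
  have "integral\<^sup>L (PRW (1/2)) (\<lambda>\<omega>. HH r s t (pfx \<omega> (Suc m))) = (\<Sum>xs\<in>LL (Suc m). (1/2 * W (1/2) xs) *\<^sub>R HH r s t xs)"
    by (rule integral_pfx) auto
  also have "\<dots> = (if Suc m = 2 then (1/2) * exp (2 * \<i> * of_real t) * (exp (2 * \<i> * of_real r) - 1) else 0)"
  proof (cases "Suc m = 2")
    case True
    have e1: "exc [1, -1]" "exc [-1, 1]" "\<not> exc [1, 1]" "\<not> exc [-1, -1]" unfolding exc_def by (auto simp: less_Suc_eq)
    have r: "num_runs [1, -1] = 2" "num_runs [-1, 1] = 2" "num_long_runs [1, -1] = 0" "num_long_runs [-1, 1] = 0"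
      unfolding num_runs_def num_long_runs_def by simp_all
    have S: "(\<Sum>xs\<in>LL (Suc m). (1/2 * W (1/2) xs) *\<^sub>R HH r s t xs) = (1/4) *\<^sub>R FF r s t [1, -1] + (1/4) *\<^sub>R FF r s t [-1, 1]"
      unfolding True LL2 HH_def using e1 by simp
    have F1: "FF r s t [1, -1] = exp (2 * \<i> * of_real t) * (exp (2 * \<i> * of_real r) - 1)"
      unfolding FF_def G1_def G2_def using r by (simp add: algebra_simps)
    have F2: "FF r s t [-1, 1] = exp (2 * \<i> * of_real t) * (exp (2 * \<i> * of_real r) - 1)"
      unfolding FF_def G1_def G2_def using r by (simp add: algebra_simps)
    show ?thesis unfolding S F1 F2 using True by (simp add: scaleR_conv_of_real algebra_simps)
  next
    case False
    show ?thesis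
    proof (cases "even (Suc m)")
      case True
      then have m4: "Suc m \<ge> 4" using False by presburger
      have "(\<Sum>xs\<in>LL (Suc m). (1/2 * W (1/2) xs) *\<^sub>R HH r s t xs) = (\<Sum>xs\<in>LL (Suc m). (1/2 * (1/2) ^ m) *\<^sub>R HH r s t xs)"
        by (intro sum.cong refl) (simp add: W_half LL_def)
      also have "\<dots> = (1/2 * (1/2) ^ m) *\<^sub>R (\<Sum>xs\<in>LL (Suc m). HH r s t xs)"
        by (simp add: scaleR_sum_right)
      also have "\<dots> = 0" using sum_HH_zero[OF m4] by simp
      finally show ?thesis using False by simp
    next
      case odd: False
      have "HH r s t xs = 0" if "xs \<in> LL (Suc m)" for xs
        using that exc_even[of xs] odd unfolding HH_def LL_def by auto
      then show ?thesis using False by simp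
    qed
  qed
  finally show ?thesis using Suc by simp
qed

lemma h_single: "HH r s t (pfx \<omega> n) = (if n = L \<omega> then HH r s t (pfx \<omega> (L \<omega>)) else 0)"
proof (cases "n = L \<omega>")
  case False
  have "\<not> exc (pfx \<omega> n)" using exc_L[of \<omega> n] False by auto
  then show ?thesis using False unfolding HH_def by simp
qed simp

lemma part2_fixed:
  "integral\<^sup>L (PRW (1/2)) (\<lambda>\<omega>. G1 r s t (steps \<omega>)) - integral\<^sup>L (PRW (1/2)) (\<lambda>\<omega>. G2 r s t (steps \<omega>))
     = (1/2) * exp (2 * \<i> * of_real t) * (exp (2 * \<i> * of_real r) - 1)"
proof -
  define M where "M = PRW (1/2)"
  interpret P: prob_space M unfolding M_def by (rule prob_PRW)
  define h where "h n \<omega> = HH r s t (pfx \<omega> n)" for n \<omega>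
  define c where "c = (1/2) * exp (2 * \<i> * of_real t) * (exp (2 * \<i> * of_real r) - 1)"
  define A where "A n = {\<omega>. exc (pfx \<omega> n)}" for n
  have a12: "(0::real) < 1/2" "(1/2::real) < 1" by auto
  have int1: "integrable M (\<lambda>\<omega>. G1 r s t (steps \<omega>))" unfolding M_def by (rule integrable_steps) (simp add: norm_G1)
  have int2: "integrable M (\<lambda>\<omega>. G2 r s t (steps \<omega>))" unfolding M_def by (rule integrable_steps) (simp add: norm_G2)
  have intF: "integrable M (\<lambda>\<omega>. FF r s t (steps \<omega>))" unfolding M_def by (rule integrable_steps) (simp add: norm_FF)
  have inth: "integrable M (h n)" for n unfolding M_def h_def by (rule integrable_pfxH) (rule norm_HH)
  have summ: "AE \<omega> in M. summable (\<lambda>n. norm (h n \<omega>))"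
  proof (rule AE_I2)
    fix \<omega>
    have "norm (h n \<omega>) = (if n = L \<omega> then norm (h (L \<omega>) \<omega>) else 0)" for n
      unfolding h_def using h_single[of r s t \<omega> n] by (cases "n = L \<omega>") auto
    then have "(\<lambda>n. norm (h n \<omega>)) = (\<lambda>n. if n = L \<omega> then norm (h (L \<omega>) \<omega>) else 0)" by (rule ext)
    then show "summable (\<lambda>n. norm (h n \<omega>))"
      using sums_summable[OF sums_single[of "L \<omega>" "\<lambda>_. norm (h (L \<omega>) \<omega>)"]] by simp
  qed
  have sA: "A n \<in> sets M" for n unfolding A_def M_def by (rule sets_pfx)
  have dA: "disjoint_family A"
    unfolding disjoint_family_on_def A_def using exc_L by blast
  have sumA: "summable (\<lambda>n. measure M (A n))"
    using P.finite_measure_UNION[of A] sA dA by (auto intro: sums_summable)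
  have bnd: "(\<integral>\<omega>. norm (h n \<omega>) \<partial>M) \<le> 2 * measure M (A n)" for n
  proof -
    have "(\<integral>\<omega>. norm (h n \<omega>) \<partial>M) \<le> (\<integral>\<omega>. 2 * indicator (A n) \<omega> \<partial>M)"
    proof (rule integral_mono)
      show "integrable M (\<lambda>\<omega>. norm (h n \<omega>))" using inth by auto
      show "integrable M (\<lambda>\<omega>. 2 * indicator (A n) \<omega> :: real)"
        using sA by (intro integrable_mult_right integrable_real_indicator) (auto simp: less_top[symmetric] P.emeasure_finite)
      fix \<omega> show "norm (h n \<omega>) \<le> 2 * indicator (A n) \<omega>"
        unfolding h_def A_def HH_def using norm_FF by (auto split: split_indicator)
    qed
    also have "\<dots> = 2 * measure M (A n)" using sA by simp
    finally show ?thesis .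
  qed
  have sumint: "summable (\<lambda>n. \<integral>\<omega>. norm (h n \<omega>) \<partial>M)"
  proof (rule summable_comparison_test)
    show "\<exists>N. \<forall>n\<ge>N. norm (\<integral>\<omega>. norm (h n \<omega>) \<partial>M) \<le> 2 * measure M (A n)"
      using bnd by (auto intro!: exI[of _ 0] simp: integral_nonneg_AE)
    show "summable (\<lambda>n. 2 * measure M (A n))" using sumA by (rule summable_mult)
  qed
  note isum = integrable_suminf[OF inth summ sumint] integral_suminf[OF inth summ sumint]
  have "integral\<^sup>L M (\<lambda>\<omega>. G1 r s t (steps \<omega>)) - integral\<^sup>L M (\<lambda>\<omega>. G2 r s t (steps \<omega>)) = integral\<^sup>L M (\<lambda>\<omega>. FF r s t (steps \<omega>))"
    unfolding FF_def using int1 int2 by simp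
  also have "\<dots> = integral\<^sup>L M (\<lambda>\<omega>. \<Sum>n. h n \<omega>)"
  proof (rule integral_cong_AE)
    show "(\<lambda>\<omega>. FF r s t (steps \<omega>)) \<in> borel_measurable M" using intF by auto
    have "integrable M (\<lambda>\<omega>. \<Sum>n. h n \<omega>)" by (rule isum(1))
    then show "(\<lambda>\<omega>. \<Sum>n. h n \<omega>) \<in> borel_measurable M" by auto
    have null: "{\<omega>. \<not> ret \<omega>} \<in> null_sets M"
      using sets_nret[of "1/2"] nret_null[OF a12] unfolding M_def by (simp add: null_sets_def P.emeasure_eq_measure[unfolded M_def])
    show "AE \<omega> in M. FF r s t (steps \<omega>) = (\<Sum>n. h n \<omega>)"
    proof (rule AE_I'[OF null], rule subsetI)
      fix \<omega> assume "\<omega> \<in> {\<omega> \<in> space M. FF r s t (steps \<omega>) \<noteq> (\<Sum>n. h n \<omega>)}"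
      then have ne: "FF r s t (steps \<omega>) \<noteq> (\<Sum>n. h n \<omega>)" by simp
      show "\<omega> \<in> {\<omega>. \<not> ret \<omega>}"
      proof (simp, rule notI)
        assume r: "ret \<omega>"
        have "h n \<omega> = (if n = L \<omega> then FF r s t (steps \<omega>) else 0)" for n
          using h_single[of r s t \<omega> n] ret_L[OF r] steps_pfx[of \<omega>] unfolding h_def HH_def by simp
        then have "(\<Sum>n. h n \<omega>) = FF r s t (steps \<omega>)"
          using sums_unique[OF sums_single[of "L \<omega>" "\<lambda>_. FF r s t (steps \<omega>)"]] by simp
        then show False using ne by simp
      qed
    qed
  qed
  also have "\<dots> = (\<Sum>n. integral\<^sup>L M (h n))" by (rule isum(2))
  also have "\<dots> = c"
  proof -
    have "integral\<^sup>L M (h n) = (if n = 2 then c else 0)" for n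
      unfolding M_def h_def c_def by (rule integral_h)
    then show ?thesis using sums_unique[OF sums_single[of 2 "\<lambda>_. c"]] by simp
  qed
  finally show ?thesis unfolding M_def c_def .
qed

theorem corollary2:
  fixes a :: real
  assumes "0 < a" and "a < 1"
  shows "(\<forall>n k l :: nat. n \<ge> 2 \<longrightarrow>
            (1 - a) * measure (PRW a)
               {\<omega> \<in> space (PRW a). L \<omega> = 2*n \<and> R \<omega> = 2*k \<and> U \<omega> = l}
          = a * measure (PRW (1 - a))
               {\<omega> \<in> space (PRW (1 - a)). L \<omega> = 2*n \<and> L \<omega> - R \<omega> = 2*k \<and> U \<omega> = l})
       \<and> (\<forall>r s t :: real.
            integral\<^sup>L (PRW (1/2))
              (\<lambda>\<omega>. exp (\<i> * of_real (r * real (R \<omega>))) * exp (\<i> * of_real (s * real (U \<omega>)))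
                   * exp (\<i> * of_real (t * real (L \<omega>))))
          - integral\<^sup>L (PRW (1/2))
              (\<lambda>\<omega>. exp (\<i> * of_real (r * real (L \<omega> - R \<omega>))) * exp (\<i> * of_real (s * real (U \<omega>)))
                   * exp (\<i> * of_real (t * real (L \<omega>))))
          = (1/2) * exp (2 * \<i> * of_real t) * (exp (2 * \<i> * of_real r) - 1))"
proof (intro conjI allI impI)
  fix n k l :: nat assume n: "n \<ge> 2"
  show "(1 - a) * measure (PRW a) {\<omega> \<in> space (PRW a). L \<omega> = 2*n \<and> R \<omega> = 2*k \<and> U \<omega> = l}
      = a * measure (PRW (1 - a)) {\<omega> \<in> space (PRW (1 - a)). L \<omega> = 2*n \<and> L \<omega> - R \<omega> = 2*k \<and> U \<omega> = l}"
    by (rule part1[OF assms n])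
next
  fix r s t :: real
  have e1: "(\<lambda>\<omega>. exp (\<i> * of_real (r * real (R \<omega>))) * exp (\<i> * of_real (s * real (U \<omega>)))
                   * exp (\<i> * of_real (t * real (L \<omega>)))) = (\<lambda>\<omega>. G1 r s t (steps \<omega>))"
    unfolding G1_def R_def U_def L_steps ..
  have e2: "(\<lambda>\<omega>. exp (\<i> * of_real (r * real (L \<omega> - R \<omega>))) * exp (\<i> * of_real (s * real (U \<omega>)))
                   * exp (\<i> * of_real (t * real (L \<omega>)))) = (\<lambda>\<omega>. G2 r s t (steps \<omega>))"
    unfolding G2_def R_def U_def L_steps ..
  show "integral\<^sup>L (PRW (1/2))
              (\<lambda>\<omega>. exp (\<i> * of_real (r * real (R \<omega>))) * exp (\<i> * of_real (s * real (U \<omega>)))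
                   * exp (\<i> * of_real (t * real (L \<omega>))))
          - integral\<^sup>L (PRW (1/2))
              (\<lambda>\<omega>. exp (\<i> * of_real (r * real (L \<omega> - R \<omega>))) * exp (\<i> * of_real (s * real (U \<omega>)))
                   * exp (\<i> * of_real (t * real (L \<omega>))))
          = (1/2) * exp (2 * \<i> * of_real t) * (exp (2 * \<i> * of_real r) - 1)"
    unfolding e1 e2 by (rule part2_fixed)
qed

end
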